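(* Let $p$ be a prime, $a$ an integer with $p\nmid a$, and $\chi$ a Dirichlet character modulo $p^m$ ($m\ge1$). Let $n\ge m$ and $k\ge0$ be integers with $\chi(-1)\ne(-1)^k$. If $p\ge5$, or $p\in\{2,3\}$ and $n\ge2$, then $$(1-\chi(a)a^{k+1})L(-k,\chi)\equiv\chi(a)a^k\sum_{j=1}^{p^n-1}\chi(j)j^k\left\lfloor\frac{ja}{p^n}\right\rfloor\pmod{p^n}.$$
   Context: $L(-k,\chi)=-B_{k+1,\chi}/(k+1)$ is the value of the Dirichlet $L$-function $L(s,\chi)=\sum_{n\ge1}\chi(n)n^{-s}$ at $s=-k$, where $\sum_{k\ge0}B_{k,\chi}t^k/k!=\sum_{a=1}^f\chi(a)te^{at}/(e^{ft}-1)$ for $\chi$ modulo $f$. $\lfloor x\rfloor$ is the floor function. All quantities lie in the cyclotomic field generated by the values of $\chi$; $x\equiv y\pmod{p^n}$ means $(x-y)/p^n$ is integral at every prime above $p$. *)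

theory Defs
  imports Complex_Main "HOL-Computational_Algebra.Computational_Algebra"
begin

definition dirichlet_char :: "int \<Rightarrow> (int \<Rightarrow> complex) \<Rightarrow> bool" where
  "dirichlet_char N \<chi> \<longleftrightarrow> N \<ge> 1 \<and> \<chi> 1 = 1 \<and>
     (\<forall>x y. \<chi> (x * y) = \<chi> x * \<chi> y) \<and>
     (\<forall>x. \<chi> (x + N) = \<chi> x) \<and>
     (\<forall>x. \<chi> x \<noteq> 0 \<longleftrightarrow> coprime x N)"

definition gen_bernoulli :: "(int \<Rightarrow> complex) \<Rightarrow> nat \<Rightarrow> nat \<Rightarrow> complex" where
  "gen_bernoulli \<chi> f k = fact k * fps_nth
     ((\<Sum>a=1..f. fps_const (\<chi> (int a)) * fps_X * fps_exp (of_nat a))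
        / (fps_exp (of_nat f) - 1)) k"

definition L_neg :: "(int \<Rightarrow> complex) \<Rightarrow> nat \<Rightarrow> nat \<Rightarrow> complex" where
  "L_neg \<chi> f k = - gen_bernoulli \<chi> f (k + 1) / of_nat (k + 1)"

definition algebraic_integer :: "complex \<Rightarrow> bool" where
  "algebraic_integer x \<longleftrightarrow> (\<exists>q :: int poly. lead_coeff q = 1 \<and> poly (map_poly of_int q) x = 0)"

(* (x - y)/p^n is integral at every prime above p, i.e. lies in the semilocal ring
   Z_(p) O_K: some integer d prime to p makes d (x-y)/p^n an algebraic integer *)
definition cong_ppow :: "nat \<Rightarrow> nat \<Rightarrow> complex \<Rightarrow> complex \<Rightarrow> bool" where
  "cong_ppow p n x y \<longleftrightarrow>
     (\<exists>d::int. \<not> int p dvd d \<and> algebraic_integer (of_int d * (x - y) / of_nat (p ^ n)))"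

end

theory Submission
  imports Defs "Jordan_Normal_Form.Char_Poly" "HOL-Number_Theory.Number_Theory"
begin

lemma pow_mod_root: fixes z :: complex assumes "z ^ M = 1" shows "z ^ n = z ^ (n mod M)"
proof -
  have "z ^ n = z ^ (M * (n div M) + n mod M)" by simp
  also have "\<dots> = (z ^ M) ^ (n div M) * z ^ (n mod M)" by (metis power_add power_mult)
  finally show ?thesis using assms by simp
qed

lemma root_comb_shift:
  fixes z :: complex and M :: nat and c :: "nat \<Rightarrow> int"
  assumes zM: "z ^ M = 1" and s: "s < M"
  shows "(\<Sum>u<M. of_int (c ((u + M - s) mod M)) * z ^ u) = (\<Sum>t<M. of_int (c t) * z ^ t) * z ^ s"
proof -
  define e where "e = (\<Sum>t<M. of_int (c t) * z ^ t)"
  have M: "M > 0" using s by simp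
    define g where "g t = (t + s) mod M" for t
    have inv: "(g t + M - s) mod M = t" if "t < M" for t
    proof -
      have "g t + M - s = g t + (M - s)" using s by simp
      hence "(g t + M - s) mod M = ((t + s) + (M - s)) mod M" unfolding g_def by (simp add: mod_add_left_eq)
      also have "(t + s) + (M - s) = t + M" using s by simp
      finally show ?thesis using that by simp
    qed
    have inv2: "((u + M - s) mod M + s) mod M = u" if "u < M" for u
    proof -
      have "((u + M - s) mod M + s) mod M = ((u + M - s) + s) mod M" by (simp add: mod_add_left_eq)
      also have "(u + M - s) + s = u + M" using s by simp
      finally show ?thesis using that by simp
    qed
    have bij: "bij_betw g {..<M} {..<M}"
      by (rule bij_betw_byWitness[where f' = "\<lambda>u. (u + M - s) mod M"])
         (auto simp: inv[unfolded g_def] inv2 g_def M)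
    have "(\<Sum>u<M. of_int (c ((u + M - s) mod M)) * z ^ u)
        = (\<Sum>t<M. of_int (c ((g t + M - s) mod M)) * z ^ g t)"
      using sum.reindex_bij_betw[OF bij, of "\<lambda>u. of_int (c ((u + M - s) mod M)) * z ^ u"] by simp
    also have "\<dots> = (\<Sum>t<M. of_int (c t) * z ^ (t + s))"
      proof (rule sum.cong)
      fix t assume t: "t \<in> {..<M}"
      have "z ^ g t = z ^ (t + s)" unfolding g_def using pow_mod_root[OF zM, of "t + s"] by simp
      thus "of_int (c ((g t + M - s) mod M)) * z ^ g t = of_int (c t) * z ^ (t + s)"
        using inv[of t] t by simp
    qed simp
    also have "\<dots> = e * z ^ s" unfolding e_def by (simp add: sum_distrib_right power_add mult.assoc)
    finally show ?thesis unfolding e_def .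
qed

lemma alg_int_root_comb:
  fixes z :: complex and M :: nat and c :: "nat \<Rightarrow> int"
  assumes M: "M > 0" and zM: "z ^ M = 1"
  shows "algebraic_integer (\<Sum>t<M. of_int (c t) * z ^ t)"
proof -
  define e where "e = (\<Sum>t<M. of_int (c t) * z ^ t)"
  define A :: "int mat" where "A = mat M M (\<lambda>(s,u). c ((u + M - s) mod M))"
  define v :: "complex vec" where "v = vec M (\<lambda>s. z ^ s)"
  have A: "A \<in> carrier_mat M M" unfolding A_def by simp
  have key: "(\<Sum>u<M. of_int (c ((u + M - s) mod M)) * z ^ u) = e * z ^ s" if s: "s < M" for s
    using root_comb_shift[OF zM s] unfolding e_def by simp
  have v: "v \<in> carrier_vec M" unfolding v_def by simp
  have v0: "v \<noteq> 0\<^sub>v M"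
  proof
    assume "v = 0\<^sub>v M"
    hence "v $ 0 = 0" using M by simp
    thus False unfolding v_def using M by simp
  qed
  have Av: "of_int_hom.mat_hom A *\<^sub>v v = e \<cdot>\<^sub>v v"
  proof (rule eq_vecI)
    fix s assume "s < dim_vec (e \<cdot>\<^sub>v v)"
    hence s: "s < M" unfolding v_def by simp
    have "(of_int_hom.mat_hom A *\<^sub>v v) $ s = (\<Sum>u<M. of_int (c ((u + M - s) mod M)) * z ^ u)"
      using s A unfolding v_def A_def by (simp add: scalar_prod_def lessThan_atLeast0 row_def)
    also have "\<dots> = e * z ^ s" using key s by simp
    finally show "(of_int_hom.mat_hom A *\<^sub>v v) $ s = (e \<cdot>\<^sub>v v) $ s" using s unfolding v_def by simp
  qed (simp add: A_def v_def)
  have Ac: "of_int_hom.mat_hom A \<in> carrier_mat M M" using A by simp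
  have "eigenvalue (of_int_hom.mat_hom A) e"
    unfolding eigenvalue_def eigenvector_def using Av v v0 Ac by auto
  hence "poly (char_poly (of_int_hom.mat_hom A)) e = 0"
    using eigenvalue_root_char_poly[OF Ac, of e] by blast
  moreover have "char_poly (of_int_hom.mat_hom A :: complex mat) = map_poly of_int (char_poly A)"
    by (rule of_int_hom.char_poly_hom[OF A])
  ultimately have "poly (map_poly of_int (char_poly A)) e = 0"
    by simp
  moreover have "lead_coeff (char_poly A) = 1" using degree_monic_char_poly[OF A] by simp
  ultimately show ?thesis unfolding algebraic_integer_def e_def by blast
qed

lemma prime_decomp_nat:
  fixes p n :: nat assumes p: "prime p" and n: "n > 0"
  shows "\<exists>e d. n = p ^ e * d \<and> \<not> p dvd d \<and> e < n"
  using n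
proof (induction n rule: less_induct)
  case (less n)
  show ?case
  proof (cases "p dvd n")
    case False thus ?thesis using less.prems by (intro exI[of _ 0] exI[of _ n]) auto
  next
    case True
    then obtain n' where n': "n = p * n'" by blast
    have p1: "p > 1" using p prime_gt_1_nat by blast
    have "n' > 0" using less.prems n' by (cases "n' = 0") auto
    moreover have "n' < n" using n' p1 \<open>n' > 0\<close> by simp
    ultimately obtain e d where ed: "n' = p ^ e * d" "\<not> p dvd d" "e < n'" using less.IH by blast
    have "Suc e < n" using ed(3) \<open>n' < n\<close> by linarith
    thus ?thesis using ed n' by (intro exI[of _ "Suc e"] exI[of _ d]) (auto simp: mult.assoc)
  qed
qed

locale pset =
  fixes p :: nat and z :: complex and Mz :: nat
  assumes prime: "prime p" and Mz: "Mz > 0" and zM: "z ^ Mz = 1"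
begin

lemma p_pos: "p > 0" using prime prime_gt_0_nat by blast
lemma p_gt1: "p > 1" using prime prime_gt_1_nat by blast
lemma prime_int: "prime (int p)" using prime by simp

definition ZZ :: "complex set" where "ZZ = {x. \<exists>c::nat\<Rightarrow>int. x = (\<Sum>t<Mz. of_int (c t) * z ^ t)}"

lemma ZZ_of_int: "of_int n \<in> ZZ"
proof -
  have "(\<Sum>t<Mz. of_int (if t = 0 then n else 0) * z ^ t) = (\<Sum>t<Mz. if t = 0 then (of_int n :: complex) else 0)"
    by (rule sum.cong) auto
  also have "\<dots> = of_int n" using Mz by simp
  finally show ?thesis unfolding ZZ_def by (intro CollectI exI[of _ "\<lambda>t. if t = 0 then n else 0"]) simp
qed

lemma ZZ_0: "0 \<in> ZZ" and ZZ_1: "1 \<in> ZZ"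
  using ZZ_of_int[of 0] ZZ_of_int[of 1] by simp_all

lemma ZZ_add: assumes "x \<in> ZZ" "y \<in> ZZ" shows "x + y \<in> ZZ"
proof -
  obtain c1 c2 where "x = (\<Sum>t<Mz. of_int (c1 t) * z ^ t)" "y = (\<Sum>t<Mz. of_int (c2 t) * z ^ t)"
    using assms unfolding ZZ_def by blast
  hence "x + y = (\<Sum>t<Mz. of_int (c1 t + c2 t) * z ^ t)" by (simp add: sum.distrib distrib_right)
  thus ?thesis unfolding ZZ_def by (intro CollectI exI[of _ "\<lambda>t. c1 t + c2 t"])
qed

lemma ZZ_smult: assumes "x \<in> ZZ" shows "of_int n * x \<in> ZZ"
proof -
  obtain c1 where "x = (\<Sum>t<Mz. of_int (c1 t) * z ^ t)"
    using assms unfolding ZZ_def by blast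
  hence "of_int n * x = (\<Sum>t<Mz. of_int (n * c1 t) * z ^ t)" by (simp add: sum_distrib_left mult.assoc)
  thus ?thesis unfolding ZZ_def by (intro CollectI exI[of _ "\<lambda>t. n * c1 t"])
qed

lemma ZZ_uminus: "x \<in> ZZ \<Longrightarrow> - x \<in> ZZ"
  using ZZ_smult[of x "-1"] by simp

lemma ZZ_diff: "x \<in> ZZ \<Longrightarrow> y \<in> ZZ \<Longrightarrow> x - y \<in> ZZ"
  using ZZ_add[of x "-y"] ZZ_uminus[of y] by simp

lemma ZZ_sum: "(\<And>i. i \<in> A \<Longrightarrow> f i \<in> ZZ) \<Longrightarrow> sum f A \<in> ZZ"
proof (induction A rule: infinite_finite_induct)
  case (insert a A) thus ?case using ZZ_add by simp
qed (auto simp: ZZ_0)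

lemma ZZ_mult_zpow: assumes "x \<in> ZZ" shows "x * z ^ s \<in> ZZ"
proof -
  obtain c1 where c1: "x = (\<Sum>t<Mz. of_int (c1 t) * z ^ t)"
    using assms unfolding ZZ_def by blast
  have "x * z ^ s = x * z ^ (s mod Mz)" using pow_mod_root[OF zM, of s] by simp
  also have "\<dots> = (\<Sum>u<Mz. of_int (c1 ((u + Mz - s mod Mz) mod Mz)) * z ^ u)"
    unfolding c1 using root_comb_shift[OF zM, of "s mod Mz" c1] Mz by simp
  finally show ?thesis unfolding ZZ_def by (intro CollectI exI[of _ "\<lambda>u. c1 ((u + Mz - s mod Mz) mod Mz)"])
qed

lemma ZZ_zpow: "z ^ s \<in> ZZ" using ZZ_mult_zpow[OF ZZ_1, of s] by simp

lemma ZZ_mult: assumes "x \<in> ZZ" "y \<in> ZZ" shows "x * y \<in> ZZ"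
proof -
  obtain c1 where c1: "x = (\<Sum>t<Mz. of_int (c1 t) * z ^ t)"
    using assms unfolding ZZ_def by blast
  have "x * y = (\<Sum>t<Mz. of_int (c1 t) * (y * z ^ t))" unfolding c1
    by (subst sum_distrib_right) (simp add: mult_ac)
  also have "\<dots> \<in> ZZ" by (intro ZZ_sum ZZ_smult ZZ_mult_zpow assms(2))
  finally show ?thesis .
qed

lemma ZZ_pow: "x \<in> ZZ \<Longrightarrow> x ^ n \<in> ZZ"
  by (induction n) (auto simp: ZZ_1 ZZ_mult)

lemma ZZ_of_nat: "of_nat n \<in> ZZ" using ZZ_of_int[of "int n"] by simp

definition PP :: "complex set" where "PP = {x. \<exists>d::int. \<not> int p dvd d \<and> of_int d * x \<in> ZZ}"

lemma PP_ZZ: "x \<in> ZZ \<Longrightarrow> x \<in> PP"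
  unfolding PP_def using p_gt1 by (intro CollectI exI[of _ 1]) auto

lemma ndvd_mult: "\<not> int p dvd d1 \<Longrightarrow> \<not> int p dvd d2 \<Longrightarrow> \<not> int p dvd (d1 * d2)"
  using prime_int by (simp add: prime_dvd_mult_iff)

lemma PP_add: assumes "x \<in> PP" "y \<in> PP" shows "x + y \<in> PP"
proof -
  obtain d1 d2 where d: "\<not> int p dvd d1" "of_int d1 * x \<in> ZZ" "\<not> int p dvd d2" "of_int d2 * y \<in> ZZ"
    using assms unfolding PP_def by blast
  have "of_int (d1 * d2) * (x + y) = of_int d2 * (of_int d1 * x) + of_int d1 * (of_int d2 * y)"
    by (simp add: algebra_simps)
  also have "\<dots> \<in> ZZ" by (rule ZZ_add; rule ZZ_smult; fact)
  finally show ?thesis unfolding PP_def using ndvd_mult d by blast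
qed

lemma PP_mult: assumes "x \<in> PP" "y \<in> PP" shows "x * y \<in> PP"
proof -
  obtain d1 d2 where d: "\<not> int p dvd d1" "of_int d1 * x \<in> ZZ" "\<not> int p dvd d2" "of_int d2 * y \<in> ZZ"
    using assms unfolding PP_def by blast
  have "of_int (d1 * d2) * (x * y) = (of_int d1 * x) * (of_int d2 * y)"
    by (simp add: algebra_simps)
  also have "\<dots> \<in> ZZ" by (rule ZZ_mult[OF d(2) d(4)])
  finally show ?thesis unfolding PP_def using ndvd_mult d by blast
qed

lemma PP_of_int: "of_int n \<in> PP" using PP_ZZ ZZ_of_int by blast
lemma PP_of_nat: "of_nat n \<in> PP" using PP_ZZ ZZ_of_nat by blast
lemma PP_0: "0 \<in> PP" and PP_1: "1 \<in> PP" using PP_of_int[of 0] PP_of_int[of 1] by simp_all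

lemma PP_uminus: "x \<in> PP \<Longrightarrow> - x \<in> PP"
  using PP_mult[OF PP_of_int[of "-1"], of x] by simp
lemma PP_diff: "x \<in> PP \<Longrightarrow> y \<in> PP \<Longrightarrow> x - y \<in> PP"
  using PP_add[of x "-y"] PP_uminus[of y] by simp
lemma PP_sum: "(\<And>i. i \<in> A \<Longrightarrow> f i \<in> PP) \<Longrightarrow> sum f A \<in> PP"
proof (induction A rule: infinite_finite_induct)
  case (insert a A) thus ?case using PP_add by simp
qed (auto simp: PP_0)
lemma PP_pow: "x \<in> PP \<Longrightarrow> x ^ n \<in> PP"
  by (induction n) (auto simp: PP_1 PP_mult)

lemma PP_div_int: assumes "x \<in> PP" "\<not> int p dvd d" shows "x / of_int d \<in> PP"
proof -
  obtain d1 where d: "\<not> int p dvd d1" "of_int d1 * x \<in> ZZ"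
    using assms unfolding PP_def by blast
  have "d \<noteq> 0" using assms(2) by auto
  hence "of_int (d1 * d) * (x / of_int d) = of_int d1 * x" by simp
  thus ?thesis unfolding PP_def using ndvd_mult[OF d(1) assms(2)] d(2) by auto
qed

lemma PP_div_nat: assumes "x \<in> PP" "\<not> p dvd d" shows "x / of_nat d \<in> PP"
  using PP_div_int[OF assms(1), of "int d"] assms(2) by simp

definition QQ :: "complex set" where "QQ = {x. \<exists>e. of_nat p ^ e * x \<in> PP}"

lemma QQ_PP: "x \<in> PP \<Longrightarrow> x \<in> QQ"
  unfolding QQ_def by (intro CollectI exI[of _ 0]) simp

lemma PP_mono_exp: assumes "of_nat p ^ e * x \<in> PP" "e \<le> e'" shows "of_nat p ^ e' * x \<in> PP"
proof -
  have eq: "of_nat p ^ e' * x = of_nat p ^ (e' - e) * (of_nat p ^ e * x)"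
    using assms(2) by (metis le_add_diff_inverse2 power_add mult.assoc)
  have "of_nat p ^ (e' - e) * (of_nat p ^ e * x) \<in> PP" by (rule PP_mult[OF PP_pow[OF PP_of_nat] assms(1)])
  thus ?thesis by (simp only: eq)
qed

lemma QQ_add: assumes "x \<in> QQ" "y \<in> QQ" shows "x + y \<in> QQ"
proof -
  obtain e1 e2 where e: "of_nat p ^ e1 * x \<in> PP" "of_nat p ^ e2 * y \<in> PP"
    using assms unfolding QQ_def by blast
  have "of_nat p ^ (e1 + e2) * (x + y) = of_nat p ^ (e1 + e2) * x + of_nat p ^ (e1 + e2) * y"
    by (simp add: algebra_simps)
  also have "\<dots> \<in> PP" using PP_add[OF PP_mono_exp[OF e(1), of "e1+e2"] PP_mono_exp[OF e(2), of "e1+e2"]] by simp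
  finally show ?thesis unfolding QQ_def by blast
qed

lemma QQ_mult: assumes "x \<in> QQ" "y \<in> QQ" shows "x * y \<in> QQ"
proof -
  obtain e1 e2 where e: "of_nat p ^ e1 * x \<in> PP" "of_nat p ^ e2 * y \<in> PP"
    using assms unfolding QQ_def by blast
  have "of_nat p ^ (e1 + e2) * (x * y) = (of_nat p ^ e1 * x) * (of_nat p ^ e2 * y)"
    by (simp add: algebra_simps power_add)
  also have "\<dots> \<in> PP" by (rule PP_mult[OF e(1) e(2)])
  finally show ?thesis unfolding QQ_def by blast
qed

lemma QQ_of_int: "of_int n \<in> QQ" using QQ_PP PP_of_int by blast
lemma QQ_0: "0 \<in> QQ" using QQ_PP PP_0 by blast
lemma QQ_uminus: "x \<in> QQ \<Longrightarrow> - x \<in> QQ" using QQ_mult[OF QQ_of_int[of "-1"], of x] by simp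
lemma QQ_diff: "x \<in> QQ \<Longrightarrow> y \<in> QQ \<Longrightarrow> x - y \<in> QQ"
  using QQ_add[of x "-y"] QQ_uminus[of y] by simp
lemma QQ_sum: "(\<And>i. i \<in> A \<Longrightarrow> f i \<in> QQ) \<Longrightarrow> sum f A \<in> QQ"
proof (induction A rule: infinite_finite_induct)
  case (insert a A) thus ?case using QQ_add by simp
qed (auto simp: QQ_0)

lemma QQ_div_nat: assumes "x \<in> QQ" "d > 0" shows "x / of_nat d \<in> QQ"
proof -
  obtain e d' where ed: "d = p ^ e * d'" "\<not> p dvd d'" using prime_decomp_nat[OF prime assms(2)] by blast
  obtain e1 where e1: "of_nat p ^ e1 * x \<in> PP" using assms unfolding QQ_def by blast
  have "of_nat p ^ (e1 + e) * (x / of_nat d) = (of_nat p ^ e1 * x) / of_nat d'"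
    using ed p_pos by (simp add: power_add field_simps)
  also have "\<dots> \<in> PP" using PP_div_nat[OF e1 ed(2)] .
  finally show ?thesis unfolding QQ_def by blast
qed

lemma pow_div_PP: assumes "d > 0" "e \<ge> d" shows "of_nat p ^ e / of_nat d \<in> PP"
proof -
  obtain f d' where ed: "d = p ^ f * d'" "\<not> p dvd d'" "f < d" using prime_decomp_nat[OF prime assms(1)] by blast
  have fe: "f \<le> e" using ed(3) assms(2) by simp
  have pe: "(of_nat p ^ e :: complex) = of_nat p ^ (e - f) * of_nat p ^ f"
    using fe by (metis le_add_diff_inverse2 power_add)
  have "of_nat p ^ e / of_nat d = (of_nat p ^ (e - f) * of_nat p ^ f) / (of_nat d' * (of_nat p ^ f :: complex))"
    using pe ed(1) by (simp add: mult.commute)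
  also have "\<dots> = of_nat p ^ (e - f) / of_nat d'" using p_pos by simp
  finally have "of_nat p ^ e / of_nat d = (of_nat p ^ (e - f) / of_nat d' :: complex)" .
  also have "\<dots> \<in> PP" by (intro PP_div_nat PP_pow PP_of_nat ed)
  finally show ?thesis .
qed

lemma QQ_common: fixes n :: nat shows "(\<And>i. i < n \<Longrightarrow> f i \<in> QQ) \<Longrightarrow> \<exists>e. \<forall>i<n. of_nat p ^ e * f i \<in> PP"
proof (induction n)
  case 0 thus ?case by simp
next
  case (Suc n)
  then obtain e where e: "\<forall>i<n. of_nat p ^ e * f i \<in> PP" by auto
  obtain e' where e': "of_nat p ^ e' * f n \<in> PP" using Suc.prems[of n] unfolding QQ_def by auto
  have "\<forall>i<Suc n. of_nat p ^ (e + e') * f i \<in> PP"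
  proof (intro allI impI)
    fix i assume "i < Suc n"
    then consider "i < n" | "i = n" by linarith
    thus "of_nat p ^ (e + e') * f i \<in> PP"
    proof cases
      case 1 thus ?thesis using PP_mono_exp[of e "f i" "e + e'"] e by simp
    next
      case 2 thus ?thesis using PP_mono_exp[of e' "f i" "e + e'"] e' by simp
    qed
  qed
  thus ?case by blast
qed

definition cg :: "nat \<Rightarrow> complex \<Rightarrow> complex \<Rightarrow> bool" where
  "cg n x y \<longleftrightarrow> (x - y) / of_nat p ^ n \<in> PP"

lemma cg_intro: assumes "w \<in> PP" "x - y = of_nat p ^ n * w" shows "cg n x y"
  unfolding cg_def using assms p_pos by simp

lemma cg_refl: "cg n x x" unfolding cg_def by (simp add: PP_0)

lemma cg_sym: "cg n x y \<Longrightarrow> cg n y x"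
proof -
  assume "cg n x y"
  hence "- ((x - y) / of_nat p ^ n) \<in> PP" unfolding cg_def by (rule PP_uminus)
  moreover have "- ((x - y) / of_nat p ^ n) = (y - x) / of_nat p ^ n" by (simp add: diff_divide_distrib)
  ultimately show ?thesis unfolding cg_def by simp
qed

lemma cg_trans: "cg n x y \<Longrightarrow> cg n y w \<Longrightarrow> cg n x w"
proof -
  assume a: "cg n x y" "cg n y w"
  have "(x - w) / of_nat p ^ n = (x - y) / of_nat p ^ n + (y - w) / of_nat p ^ n" by (simp add: diff_divide_distrib)
  thus ?thesis using a PP_add unfolding cg_def by simp
qed

lemma cg_add: "cg n x y \<Longrightarrow> cg n x' y' \<Longrightarrow> cg n (x + x') (y + y')"
proof -
  assume a: "cg n x y" "cg n x' y'"
  have "((x + x') - (y + y')) / of_nat p ^ n = (x - y) / of_nat p ^ n + (x' - y') / of_nat p ^ n"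
    by (simp add: diff_divide_distrib add_divide_distrib)
  thus ?thesis using a PP_add unfolding cg_def by simp
qed

lemma cg_diff: "cg n x y \<Longrightarrow> cg n x' y' \<Longrightarrow> cg n (x - x') (y - y')"
proof -
  assume a: "cg n x y" "cg n x' y'"
  have "((x - x') - (y - y')) / of_nat p ^ n = (x - y) / of_nat p ^ n - (x' - y') / of_nat p ^ n"
    by (simp add: diff_divide_distrib)
  thus ?thesis using a PP_diff unfolding cg_def by simp
qed

lemma cg_mult: "w \<in> PP \<Longrightarrow> cg n x y \<Longrightarrow> cg n (w * x) (w * y)"
proof -
  assume a: "w \<in> PP" "cg n x y"
  have eq: "(w * x - w * y) / of_nat p ^ n = w * ((x - y) / of_nat p ^ n)"
    by (simp add: right_diff_distrib)
  have h: "w * ((x - y) / of_nat p ^ n) \<in> PP" using a PP_mult unfolding cg_def by blast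
  show ?thesis unfolding cg_def eq by (rule h)
qed

lemma cg_sum: "(\<And>i. i \<in> A \<Longrightarrow> cg n (f i) (g i)) \<Longrightarrow> cg n (sum f A) (sum g A)"
proof (induction A rule: infinite_finite_induct)
  case (insert a A) thus ?case using cg_add by simp
qed (auto simp: cg_refl)

lemma cg_mono: assumes "cg n x y" "n' \<le> n" shows "cg n' x y"
proof -
  have eq: "(x - y) / of_nat p ^ n' = of_nat p ^ (n - n') * ((x - y) / of_nat p ^ n)"
    using assms(2) p_pos by (simp add: power_diff field_simps)
  have h: "of_nat p ^ (n - n') * ((x - y) / of_nat p ^ n) \<in> PP"
    using assms(1) unfolding cg_def by (intro PP_mult PP_pow PP_of_nat)
  show ?thesis unfolding cg_def eq by (rule h)
qed

lemma cg_zero_iff: "cg n x 0 \<longleftrightarrow> x / of_nat p ^ n \<in> PP" unfolding cg_def by simp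

lemma cg_cong_ppow: assumes "cg n x y" shows "cong_ppow p n x y"
proof -
  obtain d where d: "\<not> int p dvd d" "of_int d * ((x - y) / of_nat p ^ n) \<in> ZZ"
    using assms unfolding cg_def PP_def by blast
  then obtain c where "of_int d * ((x - y) / of_nat p ^ n) = (\<Sum>t<Mz. of_int (c t) * z ^ t)"
    unfolding ZZ_def by blast
  hence "algebraic_integer (of_int d * ((x - y) / of_nat p ^ n))"
    using alg_int_root_comb[OF Mz zM] by simp
  thus ?thesis unfolding cong_ppow_def using d(1) by (intro exI[of _ d]) simp
qed

end

lemma dcD: assumes "dirichlet_char N \<chi>"
  shows "N \<ge> 1" "\<chi> 1 = 1" "\<chi> (x * y) = \<chi> x * \<chi> y" "\<chi> (x + N) = \<chi> x" "\<chi> x \<noteq> 0 \<longleftrightarrow> coprime x N"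
  using assms unfolding dirichlet_char_def by auto

lemma chi_periodic_nat: assumes "dirichlet_char N \<chi>" shows "\<chi> (x + int q * N) = \<chi> x"
proof (induction q arbitrary: x)
  case (Suc q)
  have "\<chi> (x + int (Suc q) * N) = \<chi> ((x + int q * N) + N)"
    by (rule arg_cong[where f=\<chi>]) (simp add: algebra_simps)
  also have "\<dots> = \<chi> (x + int q * N)" by (rule dcD(4)[OF assms])
  also have "\<dots> = \<chi> x" by (rule Suc)
  finally show ?case .
qed simp

lemma chi_periodic: assumes "dirichlet_char N \<chi>" shows "\<chi> (x + q * N) = \<chi> x"
proof (cases "q \<ge> 0")
  case True
  thus ?thesis using chi_periodic_nat[OF assms, of x "nat q"] by simp
next
  case False
  have "\<chi> x = \<chi> ((x + q * N) + int (nat (-q)) * N)"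
    by (rule arg_cong[where f=\<chi>]) (use False in \<open>simp add: algebra_simps\<close>)
  also have "\<dots> = \<chi> (x + q * N)" by (rule chi_periodic_nat[OF assms])
  finally show ?thesis by simp
qed

lemma chi_mod_eq: assumes "dirichlet_char N \<chi>" "x mod N = y mod N" shows "\<chi> x = \<chi> y"
proof -
  have "\<chi> x = \<chi> (x mod N)" using chi_periodic[OF assms(1), of "x mod N" "x div N"] by simp
  moreover have "\<chi> y = \<chi> (y mod N)" using chi_periodic[OF assms(1), of "y mod N" "y div N"] by simp
  ultimately show ?thesis using assms(2) by simp
qed

lemma chi_pow: assumes "dirichlet_char N \<chi>" shows "\<chi> (x ^ n) = \<chi> x ^ n"
  by (induction n) (simp_all add: dcD[OF assms])

lemma chi_root: assumes dc: "dirichlet_char N \<chi>" and cop: "coprime x N"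
  shows "\<chi> x ^ totient (nat N) = 1"
proof -
  have N: "N \<ge> 1" using dcD(1)[OF dc] .
  define x' where "x' = nat (x mod N)"
  have x'i: "int x' = x mod N" unfolding x'_def using N by simp
  have "coprime (x mod N) N" using cop N by simp
  hence "coprime (int x') (int (nat N))" using x'i N by simp
  hence "coprime x' (nat N)" by (simp only: coprime_int_iff)
  hence "[x' ^ totient (nat N) = 1] (mod nat N)" by (rule euler_theorem)
  hence "(x' ^ totient (nat N)) mod nat N = 1 mod nat N" unfolding cong_def .
  hence "int ((x' ^ totient (nat N)) mod nat N) = int (1 mod nat N)" by simp
  hence "(int x' ^ totient (nat N)) mod N = 1 mod N" using N by (simp add: zmod_int)
  hence "\<chi> (int x' ^ totient (nat N)) = \<chi> 1" by (rule chi_mod_eq[OF dc])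
  hence "\<chi> (int x') ^ totient (nat N) = 1" using chi_pow[OF dc] dcD(2)[OF dc] by simp
  moreover have "\<chi> (int x') = \<chi> x" using x'i chi_mod_eq[OF dc, of "x mod N" x] by simp
  ultimately show ?thesis by simp
qed

lemma chi_m1: assumes dc: "dirichlet_char N \<chi>" shows "\<chi> (-1) = 1 \<or> \<chi> (-1) = -1"
proof -
  have "\<chi> (-1) * \<chi> (-1) = 1" using dcD(3)[OF dc, of "-1" "-1"] dcD(2)[OF dc] by simp
  hence "(\<chi> (-1) - 1) * (\<chi> (-1) + 1) = 0" by (simp add: algebra_simps)
  hence "\<chi> (-1) - 1 = 0 \<or> \<chi> (-1) + 1 = 0" by simp
  moreover have "\<chi> (-1) + 1 = 0 \<Longrightarrow> \<chi> (-1) = -1" by (simp add: eq_neg_iff_add_eq_0)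
  ultimately show ?thesis by auto
qed

lemma exists_root_ring:
  assumes p: "prime p" and m: "m \<ge> 1" and dc: "dirichlet_char (int p ^ m) \<chi>"
  shows "\<exists>z Mz. pset p z Mz \<and> (\<forall>x. \<chi> x \<in> pset.ZZ z Mz)"
proof -
  define Mz where "Mz = totient (p ^ m)"
  have pm: "p ^ m > 0" using p prime_gt_0_nat by simp
  have Mz: "Mz > 0" unfolding Mz_def using pm by simp
  define z where "z = cis (2 * pi / real Mz)"
  have zM: "z ^ Mz = 1" unfolding z_def DeMoivre using Mz by simp
  interpret pset p z Mz using p Mz zM by unfold_locales
  have "\<chi> x \<in> ZZ" for x
  proof (cases "\<chi> x = 0")
    case True thus ?thesis using ZZ_0 by simp
  next
    case False
    hence "coprime x (int p ^ m)" using dcD(5)[OF dc] by blast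
    hence "\<chi> x ^ totient (nat (int p ^ m)) = 1" by (rule chi_root[OF dc])
    hence "\<chi> x ^ Mz = 1" unfolding Mz_def by (simp add: nat_power_eq)
    hence "\<chi> x \<in> (\<lambda>k. cis (2 * pi * real k / real Mz)) ` {..<Mz}"
      using bij_betw_imp_surj_on[OF bij_betw_roots_unity[OF Mz]] by blast
    then obtain k where k: "\<chi> x = cis (2 * pi * real k / real Mz)" by blast
    have "\<chi> x = z ^ k" unfolding k z_def DeMoivre by (simp add: field_simps)
    thus ?thesis using ZZ_zpow by simp
  qed
  thus ?thesis using p Mz zM pset.intro by blast
qed

locale mctx = pset +
  fixes m :: nat and \<chi> :: "int \<Rightarrow> complex"
  assumes m1: "m \<ge> 1" and dc: "dirichlet_char (int p ^ m) \<chi>" and chiZZ: "\<chi> x \<in> ZZ"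
begin

lemma chi_PP: "\<chi> x \<in> PP" using chiZZ PP_ZZ by blast
lemma chi_QQ: "\<chi> x \<in> QQ" using chi_PP QQ_PP by blast
lemma chi_mult: "\<chi> (x * y) = \<chi> x * \<chi> y" using dcD(3)[OF dc] .
lemma chi_1: "\<chi> 1 = 1" using dcD(2)[OF dc] .

lemma chi_per: assumes "R \<ge> m" shows "\<chi> (x + q * int p ^ R) = \<chi> x"
proof -
  have eq: "int p ^ R = int p ^ (R - m) * int p ^ m"
    using assms by (metis le_add_diff_inverse2 power_add)
  have "\<chi> (x + q * int p ^ R) = \<chi> (x + (q * int p ^ (R - m)) * int p ^ m)"
    by (rule arg_cong[where f=\<chi>]) (simp add: eq mult.assoc)
  also have "\<dots> = \<chi> x" by (rule chi_periodic[OF dc])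
  finally show ?thesis .
qed

lemma chi_eqR: assumes "R \<ge> m" "x mod (int p ^ R) = y mod (int p ^ R)" shows "\<chi> x = \<chi> y"
proof -
  have "\<chi> x = \<chi> (x mod (int p ^ R))" using chi_per[OF assms(1), of "x mod (int p ^ R)" "x div (int p ^ R)"] by (simp only: mod_div_mult_eq)
  moreover have "\<chi> y = \<chi> (y mod (int p ^ R))" using chi_per[OF assms(1), of "y mod (int p ^ R)" "y div (int p ^ R)"] by (simp only: mod_div_mult_eq)
  ultimately show ?thesis using assms(2) by simp
qed

lemma chi_modR: "R \<ge> m \<Longrightarrow> \<chi> (x mod (int p ^ R)) = \<chi> x"
  using chi_eqR[of R "x mod (int p ^ R)" x] by simp

lemma chi_dvd: assumes "int p dvd x" shows "\<chi> x = 0"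
proof -
  have "int p dvd int p ^ m" using m1 by (simp add: dvd_power)
  hence "\<not> coprime x (int p ^ m)" using assms prime_int
    by (metis coprime_common_divisor not_prime_unit)
  thus ?thesis using dcD(5)[OF dc] by blast
qed

lemma chi_0: "\<chi> 0 = 0" using chi_dvd by simp

lemma chi_unit: assumes "\<not> int p dvd x" shows "\<chi> x \<noteq> 0"
proof -
  have "coprime (int p) x" using prime_imp_coprime[OF prime_int assms] .
  hence "coprime x (int p ^ m)" by (simp add: coprime_commute)
  thus ?thesis using dcD(5)[OF dc] by blast
qed

lemma chi_m1': "\<chi> (-1) = 1 \<or> \<chi> (-1) = -1" using chi_m1[OF dc] .

end

context pset begin
lemma QQ_of_nat: "of_nat n \<in> QQ" using QQ_of_int[of "int n"] by simp
lemma QQ_div_fact: "x \<in> QQ \<Longrightarrow> x / fact n \<in> QQ"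
  using QQ_div_nat[of x "fact n"] by simp

lemma QQ_pow: "x \<in> QQ \<Longrightarrow> x ^ n \<in> QQ"
  by (induction n) (auto simp: QQ_mult QQ_of_nat[of 1, simplified])
end

context mctx begin

definition Eb :: "nat \<Rightarrow> complex" where "Eb i = gen_bernoulli \<chi> (p ^ m) i"

definition Af :: "nat \<Rightarrow> complex fps" where
  "Af F = (\<Sum>a=1..F. fps_const (\<chi> (int a)) * fps_exp (of_nat a))"

definition Gs :: "complex fps" where
  "Gs = (\<Sum>a=1..p ^ m. fps_const (\<chi> (int a)) * fps_X * fps_exp (of_nat a))
        / (fps_exp (of_nat (p ^ m)) - 1)"

lemma Eb_Gs: "Eb i = fact i * Gs $ i"
  unfolding Eb_def gen_bernoulli_def Gs_def by simp

lemma pm_pos: "p ^ m > 0" using p_pos by simp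

lemma Gs_eq: "Gs * (fps_exp (of_nat (p ^ m)) - 1) = fps_X * Af (p ^ m)"
proof -
  define g :: "complex fps" where "g = fps_exp (of_nat (p ^ m)) - 1"
  define f where "f = fps_X * Af (p ^ m)"
  have num: "(\<Sum>a=1..p ^ m. fps_const (\<chi> (int a)) * fps_X * fps_exp (of_nat a)) = f"
    unfolding f_def Af_def by (simp add: sum_distrib_left mult_ac)
  have g1: "g $ 1 \<noteq> 0" unfolding g_def using pm_pos by simp
  hence g0: "g \<noteq> 0" by auto
  have sg: "subdegree g \<le> 1" by (rule subdegree_leI[OF g1])
  show ?thesis
  proof (cases "f = 0")
    case True thus ?thesis unfolding Gs_def num using f_def by simp
  next
    case False
    have "subdegree f \<ge> 1" by (rule subdegree_geI[OF False]) (simp add: f_def)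
    hence "f div g * g = f" using fps_times_divide_eq[OF g0] sg by simp
    thus ?thesis unfolding Gs_def num g_def f_def by simp
  qed
qed

lemma Af_step: "Af (p ^ m * Suc r) = Af (p ^ m * r) + fps_exp (of_nat (p ^ m * r)) * Af (p ^ m)"
proof -
  define N where "N = p ^ m"
  define h where "h a = fps_const (\<chi> (int a)) * fps_exp (of_nat a :: complex)" for a
  have "Af (N * Suc r) = sum h {1..N * r + N}" unfolding Af_def h_def by (simp add: add.commute)
  also have "\<dots> = sum h {1..N * r} + sum h {N * r + 1..N * r + N}" by (rule sum.ub_add_nat) simp
  also have "sum h {N * r + 1..N * r + N} = sum (\<lambda>i. h (i + N * r)) {1..N}"
    using sum.shift_bounds_cl_nat_ivl[of h 1 "N * r" N] by (simp add: add.commute)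
  also have "\<dots> = fps_exp (of_nat (N * r)) * Af N"
    unfolding Af_def sum_distrib_left
  proof (rule sum.cong)
    fix i assume "i \<in> {1..N}"
    have "\<chi> (int (i + N * r)) = \<chi> (int i + int r * int p ^ m)"
      by (rule arg_cong[where f = \<chi>]) (simp add: N_def)
    also have "\<dots> = \<chi> (int i)" by (rule chi_per) simp
    finally show "h (i + N * r) = fps_exp (of_nat (N * r)) * (fps_const (\<chi> (int i)) * fps_exp (of_nat i))"
      unfolding h_def by (simp add: fps_exp_add_mult mult_ac)
  qed simp
  finally show ?thesis unfolding N_def Af_def h_def by simp
qed

lemma Af_mult: "Af (p ^ m * r) = Af (p ^ m) * (\<Sum>v<r. fps_exp (of_nat (p ^ m * v)))"
proof (induction r)
  case 0 thus ?case by (simp add: Af_def)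
next
  case (Suc r)
  show ?case unfolding Af_step Suc by (simp add: algebra_simps)
qed

lemma geom_exp: "(fps_exp c - 1) * (\<Sum>v<r. fps_exp (of_nat v * c)) = fps_exp (of_nat r * c) - (1 :: complex fps)"
proof -
  have "(\<Sum>v<r. fps_exp (of_nat v * c)) = (\<Sum>v<r. fps_exp c ^ v)"
    by (simp add: fps_exp_power_mult)
  thus ?thesis using power_diff_1_eq[of "fps_exp c" r] by (simp add: fps_exp_power_mult)
qed

lemma Gs_eq_F: "Gs * (fps_exp (of_nat (p ^ m * r)) - 1) = fps_X * Af (p ^ m * r)"
proof -
  have "fps_exp (of_nat (p ^ m * r)) - 1 = (fps_exp (of_nat (p ^ m)) - 1) * (\<Sum>v<r. fps_exp (of_nat (p ^ m * v)) :: complex fps)"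
    using geom_exp[of "of_nat (p ^ m)" r] by (simp add: mult.commute)
  hence "Gs * (fps_exp (of_nat (p ^ m * r)) - 1) = (Gs * (fps_exp (of_nat (p ^ m)) - 1)) * (\<Sum>v<r. fps_exp (of_nat (p ^ m * v)))"
    by (simp add: mult.assoc)
  also have "\<dots> = fps_X * Af (p ^ m * r)" unfolding Gs_eq Af_mult by (simp add: mult.assoc)
  finally show ?thesis .
qed

lemma power_sum_formula:
  "(\<Sum>a=1..p ^ m * r. \<chi> (int a) * of_nat a ^ K) / fact K
   = (\<Sum>i=0..K. Eb i / fact i * of_nat (p ^ m * r) ^ (Suc K - i) / fact (Suc K - i))"
proof -
  define F where "F = p ^ m * r"
  have "(Gs * (fps_exp (of_nat F) - 1)) $ Suc K = (fps_X * Af F) $ Suc K"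
    unfolding F_def Gs_eq_F ..
  moreover have "(fps_X * Af F) $ Suc K = (\<Sum>a=1..F. \<chi> (int a) * of_nat a ^ K) / fact K"
    by (simp add: Af_def fps_sum_nth sum_divide_distrib)
  moreover have "(Gs * (fps_exp (of_nat F) - 1)) $ Suc K
      = (\<Sum>i=0..K. Eb i / fact i * of_nat F ^ (Suc K - i) / fact (Suc K - i))"
  proof -
    have "(Gs * (fps_exp (of_nat F) - 1)) $ Suc K = (\<Sum>i=0..Suc K. Gs $ i * (fps_exp (of_nat F) - 1) $ (Suc K - i))"
      by (rule fps_mult_nth)
    also have "\<dots> = (\<Sum>i=0..K. Gs $ i * (fps_exp (of_nat F) - 1) $ (Suc K - i))"
      by (simp add: sum.atLeast0_atMost_Suc)
    also have "\<dots> = (\<Sum>i=0..K. Eb i / fact i * of_nat F ^ (Suc K - i) / fact (Suc K - i))"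
    proof (rule sum.cong)
      fix i assume "i \<in> {0..K}"
      hence "Suc K - i \<noteq> 0" by simp
      thus "Gs $ i * (fps_exp (of_nat F) - 1) $ (Suc K - i) = Eb i / fact i * of_nat F ^ (Suc K - i) / fact (Suc K - i)"
        by (simp add: Eb_Gs)
    qed simp
    finally show ?thesis .
  qed
  ultimately show ?thesis unfolding F_def by simp
qed

lemma Eb_QQ: "Eb K \<in> QQ"
proof (induction K rule: less_induct)
  case (less K)
  define N where "N = p ^ m"
  have N0: "N > 0" unfolding N_def using pm_pos .
  have pf: "(\<Sum>a=1..N. \<chi> (int a) * of_nat a ^ K) / fact K
     = (\<Sum>i<K. Eb i / fact i * of_nat N ^ (Suc K - i) / fact (Suc K - i)) + Eb K / fact K * of_nat N"
    using power_sum_formula[where r=1 and K=K] unfolding N_def by (simp add: atLeast0AtMost lessThan_Suc_atMost[symmetric])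
  have "Eb K = (fact K * ((\<Sum>a=1..N. \<chi> (int a) * of_nat a ^ K) / fact K
     - (\<Sum>i<K. Eb i / fact i * of_nat N ^ (Suc K - i) / fact (Suc K - i)))) / of_nat N"
    using pf N0 by (simp add: field_simps)
  also have "\<dots> \<in> QQ"
  proof -
    have S: "(\<Sum>a=1..N. \<chi> (int a) * of_nat a ^ K) \<in> QQ"
      by (rule QQ_sum, rule QQ_mult, rule chi_QQ, rule QQ_pow, rule QQ_of_nat)
    have T: "(\<Sum>i<K. Eb i / fact i * of_nat N ^ (Suc K - i) / fact (Suc K - i)) \<in> QQ"
    proof (rule QQ_sum)
      fix i assume "i \<in> {..<K}"
      hence "Eb i \<in> QQ" using less.IH by simp
      hence "Eb i / fact i \<in> QQ" by (rule QQ_div_fact)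
      hence "Eb i / fact i * of_nat N ^ (Suc K - i) \<in> QQ" using QQ_mult QQ_pow QQ_of_nat by blast
      thus "Eb i / fact i * of_nat N ^ (Suc K - i) / fact (Suc K - i) \<in> QQ" by (rule QQ_div_fact)
    qed
    have "(\<Sum>a=1..N. \<chi> (int a) * of_nat a ^ K) / fact K \<in> QQ" using S by (rule QQ_div_fact)
    hence "(\<Sum>a=1..N. \<chi> (int a) * of_nat a ^ K) / fact K - (\<Sum>i<K. Eb i / fact i * of_nat N ^ (Suc K - i) / fact (Suc K - i)) \<in> QQ"
      using T by (rule QQ_diff)
    hence "fact K * ((\<Sum>a=1..N. \<chi> (int a) * of_nat a ^ K) / fact K - (\<Sum>i<K. Eb i / fact i * of_nat N ^ (Suc K - i) / fact (Suc K - i))) \<in> QQ"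
      using QQ_mult[OF QQ_of_nat[of "fact K"]] by simp
    thus ?thesis using QQ_div_nat N0 by blast
  qed
  finally show ?case .
qed

end

lemma mult_mod_bij_sum:
  fixes F :: nat and a :: int and h :: "nat \<Rightarrow> 'b::comm_monoid_add"
  assumes F: "F > 0" and cop: "coprime a (int F)"
  shows "(\<Sum>j<F. h (nat ((int j * a) mod int F))) = (\<Sum>j<F. h j)"
proof -
  define g where "g j = nat ((int j * a) mod int F)" for j
  have inj: "inj_on g {..<F}"
  proof (rule inj_onI)
    fix j1 j2 assume j: "j1 \<in> {..<F}" "j2 \<in> {..<F}" and eq: "g j1 = g j2"
    have "(int j1 * a) mod int F = (int j2 * a) mod int F"
      using eq F unfolding g_def by (simp add: nat_eq_iff)
    hence "int F dvd int j1 * a - int j2 * a" by (simp add: mod_eq_dvd_iff)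
    hence "int F dvd (int j1 - int j2) * a" by (simp add: algebra_simps)
    hence d: "int F dvd (int j1 - int j2)" using cop by (simp add: coprime_dvd_mult_left_iff coprime_commute)
    show "j1 = j2"
    proof (rule ccontr)
      assume "j1 \<noteq> j2"
      hence "int j1 - int j2 \<noteq> 0" by simp
      from dvd_imp_le_int[OF this d] j show False by auto
    qed
  qed
  have sub: "g ` {..<F} \<subseteq> {..<F}"
    unfolding g_def using F by (auto simp: nat_less_iff)
  have "card (g ` {..<F}) = card {..<F}" using card_image[OF inj] by simp
  hence img: "g ` {..<F} = {..<F}" using card_subset_eq[OF _ sub] by simp
  have "(\<Sum>j<F. h (g j)) = sum h (g ` {..<F})" using sum.reindex[OF inj, of h] by simp
  thus ?thesis unfolding img g_def by simp
qed

lemma binom2: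
  fixes x y :: int
  shows "\<exists>w. (x + y) ^ Suc k = x ^ Suc k + int (Suc k) * y * x ^ k + y ^ 2 * w"
proof (induction k)
  case 0 thus ?case by (intro exI[of _ 0]) simp
next
  case (Suc k)
  then obtain w where w: "(x + y) ^ Suc k = x ^ Suc k + int (Suc k) * y * x ^ k + y ^ 2 * w" by blast
  have "(x + y) ^ Suc (Suc k) = (x + y) * (x ^ Suc k + int (Suc k) * y * x ^ k + y ^ 2 * w)"
    using w by simp
  also have "\<dots> = x ^ Suc (Suc k) + int (Suc (Suc k)) * y * x ^ Suc k + y ^ 2 * (x * w + int (Suc k) * x ^ k + y * w)"
    by (simp add: algebra_simps power2_eq_square)
  finally show ?case by blast
qed

lemma pow_diff_dvd: fixes x y :: int shows "x - y dvd x ^ n - y ^ n"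
  using power_diff_sumr2[of x n y] by simp

context mctx begin

definition Ssum :: "nat \<Rightarrow> nat \<Rightarrow> complex" where
  "Ssum R K = (\<Sum>j<p ^ R. \<chi> (int j) * of_nat j ^ K)"

definition Tsum :: "nat \<Rightarrow> int \<Rightarrow> nat \<Rightarrow> complex" where
  "Tsum R a k = (\<Sum>j<p ^ R. \<chi> (int j) * of_nat j ^ k * of_int ((int j * a) div int (p ^ R)))"

lemma coprime_a: assumes "\<not> int p dvd a" shows "coprime a (int (p ^ R))"
proof -
  have "coprime (int p) a" using prime_imp_coprime[OF prime_int assms] .
  thus ?thesis by (simp add: coprime_commute)
qed

lemma partIII:
  assumes R: "R \<ge> m" and a: "\<not> int p dvd a"
  shows "\<exists>U W. W \<in> ZZ \<and>
     (\<chi> a * of_int a ^ Suc k - 1) * Ssum R (Suc k) = of_nat (Suc k) * of_nat (p ^ R) * U + of_nat (p ^ R) ^ 2 * W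
     \<and> cg R U (\<chi> a * of_int a ^ k * Tsum R a k)"
proof -
  define F where "F = p ^ R"
  define Fi where "Fi = int F"
  have F0: "F > 0" unfolding F_def using p_pos by simp
  define r where "r j = (int j * a) mod Fi" for j
  define q where "q j = (int j * a) div Fi" for j
  have rq: "int j * a = r j + Fi * q j" for j unfolding r_def q_def by simp
  have r0: "r j \<ge> 0" for j unfolding r_def Fi_def using F0 by simp
  have chir: "\<chi> (r j) = \<chi> (int j * a)" for j
    unfolding r_def Fi_def F_def using chi_modR[OF R] by simp
  define K where "K = Suc k"
  have Sa: "Ssum R K = (\<Sum>j<F. \<chi> (r j) * of_int (r j) ^ K)"
  proof -
    have "(\<Sum>j<F. (\<lambda>t. \<chi> (int t) * of_nat t ^ K) (nat ((int j * a) mod int F))) = (\<Sum>j<F. \<chi> (int j) * of_nat j ^ K)"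
      by (rule mult_mod_bij_sum[OF F0]) (use coprime_a[OF a] in \<open>simp add: F_def\<close>)
    moreover have "(\<lambda>t. \<chi> (int t) * of_nat t ^ K) (nat ((int j * a) mod int F)) = \<chi> (r j) * of_int (r j) ^ K" for j
    proof -
      have "int (nat ((int j * a) mod int F)) = r j" using r0[of j] unfolding r_def Fi_def by simp
      thus ?thesis by (metis of_int_of_nat_eq)
    qed
    ultimately show ?thesis unfolding Ssum_def F_def by simp
  qed
  have Sb: "\<chi> a * of_int a ^ K * Ssum R K = (\<Sum>j<F. \<chi> (r j) * of_int (r j + Fi * q j) ^ K)"
    unfolding Ssum_def F_def[symmetric] sum_distrib_left
  proof (rule sum.cong)
    fix j assume "j \<in> {..<F}"
    have "\<chi> a * of_int a ^ K * (\<chi> (int j) * of_nat j ^ K) = \<chi> (int j * a) * of_int (int j * a) ^ K"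
      by (simp add: chi_mult power_mult_distrib mult_ac)
    also have "\<dots> = \<chi> (r j) * of_int (r j + Fi * q j) ^ K" using chir[of j] rq[of j] by simp
    finally show "\<chi> a * of_int a ^ K * (\<chi> (int j) * of_nat j ^ K) = \<chi> (r j) * of_int (r j + Fi * q j) ^ K" .
  qed simp
  have "\<forall>j. \<exists>w. (r j + Fi * q j) ^ Suc k = r j ^ Suc k + int (Suc k) * (Fi * q j) * r j ^ k + (Fi * q j) ^ 2 * w"
    using binom2 by blast
  then obtain wf where wf: "\<And>j. (r j + Fi * q j) ^ Suc k = r j ^ Suc k + int (Suc k) * (Fi * q j) * r j ^ k + (Fi * q j) ^ 2 * wf j"
    by metis
  define U where "U = (\<Sum>j<F. \<chi> (r j) * of_int (q j) * of_int (r j) ^ k)"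
  define W where "W = (\<Sum>j<F. \<chi> (r j) * of_int (q j ^ 2 * wf j))"
  have W: "W \<in> ZZ" unfolding W_def by (intro ZZ_sum ZZ_mult chiZZ ZZ_of_int)
  have eq: "(\<chi> a * of_int a ^ K - 1) * Ssum R K = of_nat K * of_nat F * U + of_nat F ^ 2 * W"
  proof -
    have "(\<chi> a * of_int a ^ K - 1) * Ssum R K = (\<Sum>j<F. \<chi> (r j) * (of_int (r j + Fi * q j) ^ K - of_int (r j) ^ K))"
      using Sa Sb by (simp add: algebra_simps sum_subtractf)
    also have "\<dots> = (\<Sum>j<F. of_nat K * of_nat F * (\<chi> (r j) * of_int (q j) * of_int (r j) ^ k) + of_nat F ^ 2 * (\<chi> (r j) * of_int (q j ^ 2 * wf j)))"
    proof (rule sum.cong)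
      fix j assume "j \<in> {..<F}"
      have "of_int (r j + Fi * q j) ^ K - of_int (r j) ^ K = (of_int ((r j + Fi * q j) ^ Suc k - r j ^ Suc k) :: complex)"
        unfolding K_def by simp
      also have "(r j + Fi * q j) ^ Suc k - r j ^ Suc k = int (Suc k) * (Fi * q j) * r j ^ k + (Fi * q j) ^ 2 * wf j"
        using wf[of j] by simp
      finally show "\<chi> (r j) * (of_int (r j + Fi * q j) ^ K - of_int (r j) ^ K) = of_nat K * of_nat F * (\<chi> (r j) * of_int (q j) * of_int (r j) ^ k) + of_nat F ^ 2 * (\<chi> (r j) * of_int (q j ^ 2 * wf j))"
        unfolding K_def Fi_def by (simp add: algebra_simps power2_eq_square)
    qed simp
    also have "\<dots> = of_nat K * of_nat F * U + of_nat F ^ 2 * W"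
      unfolding U_def W_def by (simp add: sum.distrib sum_distrib_left)
    finally show ?thesis .
  qed
  have cgU: "cg R U (\<chi> a * of_int a ^ k * Tsum R a k)"
  proof -
    have eqT: "\<chi> a * of_int a ^ k * Tsum R a k = (\<Sum>j<F. \<chi> (int j * a) * of_int (q j) * of_int (int j * a) ^ k)"
      unfolding Tsum_def F_def[symmetric] sum_distrib_left
      by (rule sum.cong) (simp_all add: chi_mult power_mult_distrib q_def Fi_def mult_ac)
    have cgj: "cg R (\<chi> (r j) * of_int (q j) * of_int (r j) ^ k) (\<chi> (int j * a) * of_int (q j) * of_int (int j * a) ^ k)" for j
    proof -
      have "Fi dvd r j - int j * a" using rq[of j] by simp
      hence "Fi dvd r j ^ k - (int j * a) ^ k" using pow_diff_dvd dvd_trans by blast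
      then obtain v where v: "r j ^ k - (int j * a) ^ k = Fi * v" by blast
      have "\<chi> (r j) * of_int (q j) * of_int (r j) ^ k - \<chi> (int j * a) * of_int (q j) * of_int (int j * a) ^ k
          = \<chi> (r j) * of_int (q j) * of_int (r j ^ k - (int j * a) ^ k)"
        using chir[of j] by (simp add: algebra_simps)
      also have "\<dots> = of_nat p ^ R * (\<chi> (r j) * of_int (q j) * of_int v)"
        unfolding v Fi_def F_def by (simp add: algebra_simps)
      finally show ?thesis by (intro cg_intro[where w = "\<chi> (r j) * of_int (q j) * of_int v"] PP_mult chi_PP PP_of_int)
    qed
    have "cg R U (\<Sum>j<F. \<chi> (int j * a) * of_int (q j) * of_int (int j * a) ^ k)"
      unfolding U_def by (rule cg_sum, rule cgj)
    thus ?thesis unfolding eqT .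
  qed
  show ?thesis using W eq cgU unfolding K_def F_def by blast
qed

end

lemma block_sum:
  fixes M q :: nat and h :: "nat \<Rightarrow> 'b::comm_monoid_add"
  shows "(\<Sum>j<M * q. h j) = (\<Sum>v<q. \<Sum>u<M. h (u + M * v))"
proof (induction q)
  case 0 thus ?case by simp
next
  case (Suc q)
  have "(\<Sum>j<M * Suc q. h j) = sum h {0..<M * q} + sum h {0 + M * q..<M + M * q}"
    using sum.atLeastLessThan_concat[of 0 "M * q" "M + M * q" h] by (simp add: atLeast0LessThan)
  also have "sum h {0 + M * q..<M + M * q} = (\<Sum>u<M. h (u + M * q))"
    by (subst sum.shift_bounds_nat_ivl) (simp add: atLeast0LessThan)
  finally show ?case using Suc by (simp add: atLeast0LessThan)
qed

lemma hermite_step: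
  fixes y :: int and P :: nat assumes P: "P > 0"
  shows "(\<Sum>t<P. (y + 1 + int t) div int P) = (\<Sum>t<P. (y + int t) div int P) + 1"
proof -
  define g where "g t = (y + int t) div int P" for t
  have "(\<Sum>t<P. (y + 1 + int t) div int P) = (\<Sum>t<P. g (Suc t))" unfolding g_def by (simp add: add_ac)
  also have "\<dots> = (\<Sum>t<Suc P. g t) - g 0" using sum.lessThan_Suc_shift[of g P] by simp
  also have "\<dots> = (\<Sum>t<P. g t) + g P - g 0" by simp
  also have "g P = g 0 + 1" unfolding g_def using P by simp
  finally show ?thesis unfolding g_def by simp
qed

lemma hermite:
  fixes y :: int and P :: nat assumes P: "P > 0"
  shows "(\<Sum>t<P. (y + int t) div int P) = y"
proof (induction y rule: int_induct[where k = 0])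
  case base
  have "(\<Sum>t<P. (0 + int t) div int P) = (\<Sum>t<P. 0::int)"
    by (rule sum.cong) auto
  thus ?case by simp
next
  case (step1 i) thus ?case using hermite_step[OF P, of i] by simp
next
  case (step2 i) thus ?case using hermite_step[OF P, of "i - 1"] by simp
qed

lemma nested_div:
  fixes x b :: int and M P :: nat assumes "M > 0" "P > 0"
  shows "(x + int M * b) div (int P * int M) = (x div int M + b) div int P"
proof -
  have "(x + int M * b) div (int P * int M) = (x + int M * b) div int M div int P"
    using zdiv_zmult2_eq[of "int P" "x + int M * b" "int M"] by (simp add: mult.commute)
  also have "(x + int M * b) div int M = b + x div int M" using assms by simp
  finally show ?thesis by (simp add: add.commute)
qed

lemma div_split:
  fixes y c :: int assumes P: "P > 0"
  shows "(y + c) div P = (y + c mod P) div P + c div P"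
proof -
  have "(y + c) div P = ((y + c mod P) + P * (c div P)) div P" by (rule arg_cong[where f = "\<lambda>x. x div P"]) simp
  also have "\<dots> = c div P + (y + c mod P) div P" by (rule div_mult_self2) (use P in simp)
  finally show ?thesis by simp
qed

lemma of_int_pow_aux:
  fixes A B v :: int and M k :: nat
  assumes h: "A ^ k = B ^ k + int M * v"
  shows "(of_int A :: complex) ^ k = of_int B ^ k + of_nat M * of_int v"
proof -
  have "(of_int (A ^ k) :: complex) = of_int (B ^ k + int M * v)" by (simp only: h)
  thus ?thesis by simp
qed

lemma v_sum:
  fixes a u :: int and M P :: nat
  assumes M: "M > 0" and P: "prime P" and a: "\<not> int P dvd a"
  shows "(\<Sum>v<P. ((u + int M * int v) * a) div (int P * int M)) = u * a div int M + (\<Sum>v<P. (int v * a) div int P)"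
proof -
  have P0: "P > 0" using P prime_gt_0_nat by blast
  define y where "y = u * a div int M"
  have "((u + int M * int v) * a) div (int P * int M) = (y + (int v * a) mod int P) div int P + (int v * a) div int P" for v
  proof -
    have "((u + int M * int v) * a) div (int P * int M) = (u * a + int M * (int v * a)) div (int P * int M)"
      by (simp add: algebra_simps)
    also have "\<dots> = (y + int v * a) div int P" unfolding y_def by (rule nested_div[OF M P0])
    also have "\<dots> = (y + (int v * a) mod int P) div int P + (int v * a) div int P"
      by (rule div_split) (simp add: P0)
    finally show ?thesis .
  qed
  hence "(\<Sum>v<P. ((u + int M * int v) * a) div (int P * int M))
      = (\<Sum>v<P. (y + (int v * a) mod int P) div int P) + (\<Sum>v<P. (int v * a) div int P)"
    by (simp add: sum.distrib)
  also have "(\<Sum>v<P. (y + (int v * a) mod int P) div int P) = (\<Sum>t<P. (y + int t) div int P)"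
  proof -
    have cop: "coprime a (int P)"
      using prime_imp_coprime[of "int P" a] P a by (simp add: coprime_commute)
    have "(\<Sum>v<P. (\<lambda>t. (y + int t) div int P) (nat ((int v * a) mod int P))) = (\<Sum>t<P. (y + int t) div int P)"
      by (rule mult_mod_bij_sum[OF P0 cop])
    thus ?thesis using P0 by simp
  qed
  also have "\<dots> = y" by (rule hermite[OF P0])
  finally show ?thesis unfolding y_def .
qed

context mctx begin

lemma eps: assumes "\<chi> (-1) \<noteq> (-1) ^ k" shows "\<chi> (-1) * (-1) ^ k = -1"
proof -
  have "(-1 :: complex) ^ k = 1 \<or> (-1 :: complex) ^ k = -1" by (cases "even k") auto
  thus ?thesis using chi_m1' assms by auto
qed

lemma Ssum_sym: assumes R: "R \<ge> m"
  shows "Ssum R k = \<chi> (-1) * (\<Sum>u<p ^ R. \<chi> (int u) * of_int ((- int u) mod int (p ^ R)) ^ k)"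
proof -
  define M where "M = p ^ R"
  have M0: "M > 0" unfolding M_def using p_pos by simp
  have cop: "coprime (-1) (int M)" by simp
  have "Ssum R k = (\<Sum>u<M. (\<lambda>t. \<chi> (int t) * of_nat t ^ k) (nat ((int u * (-1)) mod int M)))"
    unfolding Ssum_def M_def[symmetric] by (rule mult_mod_bij_sum[OF M0 cop, symmetric])
  also have "\<dots> = (\<Sum>u<M. \<chi> (-1) * (\<chi> (int u) * of_int ((- int u) mod int M) ^ k))"
  proof (rule sum.cong)
    fix u assume "u \<in> {..<M}"
    have nn: "(- int u) mod int M \<ge> 0" using M0 by simp
    have "\<chi> (int (nat ((int u * (-1)) mod int M))) = \<chi> ((- int u) mod int M)" using nn by simp
    also have "\<dots> = \<chi> (- int u)" unfolding M_def using chi_modR[OF R] by simp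
    also have "\<dots> = \<chi> (-1) * \<chi> (int u)" using chi_mult[of "-1" "int u"] by simp
    finally have c: "\<chi> (int (nat ((int u * (-1)) mod int M))) = \<chi> (-1) * \<chi> (int u)" .
    have "(of_nat (nat ((int u * (-1)) mod int M)) :: complex) = of_int ((- int u) mod int M)"
      using nn by (metis mult_minus1_right of_int_of_nat_eq int_nat_eq)
    thus "(\<lambda>t. \<chi> (int t) * of_nat t ^ k) (nat ((int u * (-1)) mod int M)) = \<chi> (-1) * (\<chi> (int u) * of_int ((- int u) mod int M) ^ k)"
      using c by simp
  qed simp
  finally show ?thesis unfolding M_def by (simp add: sum_distrib_left)
qed

lemma Ssum_zero_odd:
  assumes R: "R \<ge> m" and p2: "p \<noteq> 2" and par: "\<chi> (-1) \<noteq> (-1) ^ k"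
  shows "cg R (Ssum R k) 0"
proof -
  define M where "M = p ^ R"
  have M0: "M > 0" unfolding M_def using p_pos by simp
  have "\<forall>u. \<exists>v. ((- int u) mod int M) ^ k - (- int u) ^ k = int M * v"
  proof
    fix u
    have "int M dvd ((- int u) mod int M) - (- int u)"
      using mod_eq_dvd_iff[of "(- int u) mod int M" "int M" "- int u"] by simp
    hence "int M dvd ((- int u) mod int M) ^ k - (- int u) ^ k" using pow_diff_dvd dvd_trans by blast
    thus "\<exists>v. ((- int u) mod int M) ^ k - (- int u) ^ k = int M * v" by blast
  qed
  then obtain vf where vf: "\<And>u. ((- int u) mod int M) ^ k - (- int u) ^ k = int M * vf u" by metis
  define V where "V = (\<Sum>u<M. \<chi> (int u) * of_int (vf u))"
  have sc: "(\<Sum>u<M. \<chi> (int u) * of_int ((- int u) mod int M) ^ k) = (\<Sum>u<M. \<chi> (int u) * (of_int (- int u) ^ k + of_nat M * of_int (vf u)))"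
  proof (rule sum.cong)
    fix u
    have "((- int u) mod int M) ^ k = (- int u) ^ k + int M * vf u" using vf[of u] unfolding diff_eq_eq by (simp only: add.commute)
    hence "(of_int ((- int u) mod int M) :: complex) ^ k = of_int (- int u) ^ k + of_nat M * of_int (vf u)"
      by (rule of_int_pow_aux)
    thus "\<chi> (int u) * of_int ((- int u) mod int M) ^ k = \<chi> (int u) * (of_int (- int u) ^ k + of_nat M * of_int (vf u))"
      by (simp only:)
  qed simp
  have A1: "Ssum R k = \<chi> (-1) * (\<Sum>u<M. \<chi> (int u) * of_int ((- int u) mod int M) ^ k)"
    unfolding M_def by (rule Ssum_sym[OF R])
  have A3: "(\<Sum>u<M. \<chi> (int u) * (of_int (- int u) ^ k + of_nat M * of_int (vf u)))
      = (\<Sum>u<M. (-1) ^ k * (\<chi> (int u) * of_nat u ^ k) + of_nat M * (\<chi> (int u) * of_int (vf u)))"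
  proof (rule sum.cong)
    fix u
    have "(of_int (- int u) :: complex) = (-1) * of_nat u" by simp
    hence "(of_int (- int u) :: complex) ^ k = (-1) ^ k * of_nat u ^ k" by (simp only: power_mult_distrib)
    thus "\<chi> (int u) * (of_int (- int u) ^ k + of_nat M * of_int (vf u)) = (-1) ^ k * (\<chi> (int u) * of_nat u ^ k) + of_nat M * (\<chi> (int u) * of_int (vf u))"
      by (simp add: distrib_left mult_ac)
  qed simp
  have A4: "(\<Sum>u<M. (-1) ^ k * (\<chi> (int u) * of_nat u ^ k) + of_nat M * (\<chi> (int u) * of_int (vf u))) = (-1) ^ k * Ssum R k + of_nat M * V"
    unfolding Ssum_def M_def[symmetric] V_def by (simp only: sum.distrib sum_distrib_left)
  have "Ssum R k = \<chi> (-1) * ((-1) ^ k * Ssum R k + of_nat M * V)"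
    using A1 unfolding sc A3 A4 .
  also have "\<dots> = (\<chi> (-1) * (-1) ^ k) * Ssum R k + of_nat M * (\<chi> (-1) * V)" by (simp only: distrib_left mult.assoc mult.left_commute)
  finally have "Ssum R k = - Ssum R k + of_nat M * (\<chi> (-1) * V)" using eps[OF par] by simp
  hence "2 * Ssum R k = of_nat M * (\<chi> (-1) * V)" by simp
  hence eqS: "Ssum R k / of_nat M = (\<chi> (-1) * V) / of_int 2" using M0 by (simp add: field_simps)
  have p2': "\<not> int p dvd 2"
  proof
    assume "int p dvd 2"
    hence "int p dvd int 2" by simp
    hence "p dvd 2" by (simp only: int_dvd_int_iff)
    hence "p \<le> 2" by (simp add: dvd_imp_le)
    thus False using p2 p_gt1 by simp
  qed
  have VP: "V \<in> PP" unfolding V_def by (intro PP_sum PP_mult chi_PP PP_of_int)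
  have "(\<chi> (-1) * V) / of_int 2 \<in> PP" by (rule PP_div_int[OF PP_mult[OF chi_PP VP] p2'])
  hence "Ssum R k / of_nat M \<in> PP" unfolding eqS .
  thus ?thesis unfolding cg_def M_def by simp
qed


lemma neg_pow_c: "(of_int (- int u) :: complex) ^ k = (-1) ^ k * of_nat u ^ k"
proof -
  have "(of_int (- int u) :: complex) = (-1) * of_nat u" by simp
  thus ?thesis by (simp only: power_mult_distrib)
qed

lemma sum_lt2: "(\<Sum>u<(2::nat). f u) = f 0 + f 1" by (simp add: numeral_2_eq_2)

lemma sum0_half: assumes R: "R \<ge> m" "R \<ge> 2" and p2: "p = 2"
  shows "Ssum R 0 / 2 \<in> PP"
proof (cases "\<exists>b. \<not> 2 dvd b \<and> \<chi> b \<noteq> 1")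
  case True
  then obtain b where b: "\<not> 2 dvd b" "\<chi> b \<noteq> 1" by blast
  define M where "M = p ^ R"
  have M0: "M > 0" unfolding M_def using p_pos by simp
  have cop: "coprime b (int M)" unfolding M_def by (rule coprime_a) (use b p2 in simp)
  have "\<chi> b * Ssum R 0 = (\<Sum>u<M. \<chi> ((int u * b) mod int M))"
    unfolding Ssum_def M_def[symmetric] sum_distrib_left
  proof (rule sum.cong)
    fix u
    have "\<chi> ((int u * b) mod int M) = \<chi> (int u * b)" unfolding M_def using chi_modR[OF R(1)] by simp
    thus "\<chi> b * (\<chi> (int u) * of_nat u ^ 0) = \<chi> ((int u * b) mod int M)" by (simp add: chi_mult mult.commute)
  qed simp
  also have "\<dots> = (\<Sum>u<M. (\<lambda>t. \<chi> (int t)) (nat ((int u * b) mod int M)))"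
    by (rule sum.cong) (use M0 in simp_all)
  also have "\<dots> = (\<Sum>u<M. \<chi> (int u))" by (rule mult_mod_bij_sum[OF M0 cop])
  also have "\<dots> = Ssum R 0" unfolding Ssum_def M_def by simp
  finally have "(\<chi> b - 1) * Ssum R 0 = 0" by (simp add: algebra_simps)
  hence "Ssum R 0 = 0" using b(2) by simp
  thus ?thesis using PP_0 by simp
next
  case False
  hence one: "\<not> 2 dvd b \<Longrightarrow> \<chi> b = 1" for b by blast
  define Q :: nat where "Q = 2 ^ (R - 1)"
  have MQ: "p ^ R = 2 * Q" unfolding Q_def p2 by (subst power_Suc[symmetric]) (use R(2) in simp)
  have chiu: "\<chi> (int u) = (if odd u then 1 else 0)" for u
  proof (cases "odd u")
    case True
    hence "\<not> 2 dvd int u" by simp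
    thus ?thesis using one True by simp
  next
    case False
    hence "int p dvd int u" using p2 by simp
    thus ?thesis using chi_dvd False by simp
  qed
  have "Ssum R 0 = (\<Sum>u<2 * Q. (if odd u then 1 else 0 :: complex))"
    unfolding Ssum_def MQ by (rule sum.cong) (simp_all add: chiu)
  also have "\<dots> = (\<Sum>v<Q. \<Sum>u<2. (if odd (u + 2 * v) then 1 else 0 :: complex))"
    by (rule block_sum)
  also have "\<dots> = (\<Sum>v<Q. 1)" by (rule sum.cong) (simp_all add: sum_lt2)
  also have "\<dots> = of_nat Q" by simp
  finally have SQ: "Ssum R 0 = of_nat Q" .
  have R12: "R - 1 = Suc (R - 2)" using R(2) by simp
  have Q2: "Q = 2 * 2 ^ (R - 2)" unfolding Q_def R12 by simp
  have e: "Ssum R 0 / 2 = of_nat (2 ^ (R - 2))" unfolding SQ Q2 by simp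
  show ?thesis unfolding e by (rule PP_of_nat)
qed

lemma Ssum_half: assumes R: "R \<ge> m" "R \<ge> 2" and p2: "p = 2"
  shows "Ssum R j / 2 \<in> PP"
proof -
  define E where "E = (\<Sum>u<p ^ R. \<chi> (int u) * of_int ((int u ^ j - 1) div 2))"
  have "Ssum R j = (\<Sum>u<p ^ R. \<chi> (int u) + 2 * (\<chi> (int u) * of_int ((int u ^ j - 1) div 2)))"
    unfolding Ssum_def
  proof (rule sum.cong)
    fix u
    show "\<chi> (int u) * of_nat u ^ j = \<chi> (int u) + 2 * (\<chi> (int u) * of_int ((int u ^ j - 1) div 2))"
    proof (cases "odd u")
      case True
      hence "odd (int u ^ j)" by simp
      then obtain t where t: "int u ^ j = 2 * t + 1" by (rule oddE)
      hence "2 * ((int u ^ j - 1) div 2) = int u ^ j - 1" by simp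
      hence "(2 :: complex) * of_int ((int u ^ j - 1) div 2) = of_int (int u ^ j - 1)"
        by (metis of_int_mult of_int_numeral)
      hence h: "(of_nat u ^ j :: complex) = 1 + 2 * of_int ((int u ^ j - 1) div 2)" by simp
      show ?thesis by (subst h) (simp add: algebra_simps)
    next
      case False
      hence "int p dvd int u" using p2 by simp
      thus ?thesis using chi_dvd by simp
    qed
  qed simp
  also have "\<dots> = Ssum R 0 + 2 * E" unfolding Ssum_def E_def by (simp add: sum.distrib sum_distrib_left)
  finally have h: "Ssum R j = Ssum R 0 + 2 * E" .
  have h2: "Ssum R j / 2 = Ssum R 0 / 2 + E" unfolding h by (simp add: add_divide_distrib)
  have "E \<in> PP" unfolding E_def by (intro PP_sum PP_mult chi_PP PP_of_int)
  thus ?thesis unfolding h2 by (rule PP_add[OF sum0_half[OF R p2]])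
qed

lemma Ssum_zero_two:
  assumes R: "R \<ge> m" "R \<ge> 2" and p2: "p = 2" and par: "\<chi> (-1) \<noteq> (-1) ^ k"
  shows "cg R (Ssum R k) 0"
proof (cases k)
  case 0
  have "Ssum R 0 = \<chi> (-1) * Ssum R 0"
    using Ssum_sym[OF R(1), of 0] unfolding Ssum_def by simp
  moreover have "\<chi> (-1) = -1" using eps[OF par] 0 by simp
  ultimately have "Ssum R 0 = 0" by simp
  thus ?thesis using 0 cg_refl by simp
next
  case (Suc k')
  define M where "M = p ^ R"
  have M0: "M > 0" unfolding M_def using p_pos by simp
  have "\<forall>u. \<exists>w. (- int u + int M) ^ Suc k' = (- int u) ^ Suc k' + int (Suc k') * int M * (- int u) ^ k' + (int M) ^ 2 * w"
    using binom2 by blast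
  then obtain wf where wf: "\<And>u. (- int u + int M) ^ Suc k' = (- int u) ^ Suc k' + int (Suc k') * int M * (- int u) ^ k' + (int M) ^ 2 * wf u"
    by metis
  define W where "W = (\<Sum>u<M. \<chi> (int u) * of_int (wf u))"
  have termeq: "\<chi> (int u) * of_int ((- int u) mod int M) ^ k
     = (-1) ^ k * (\<chi> (int u) * of_nat u ^ k) + of_nat k * of_nat M * (-1) ^ k' * (\<chi> (int u) * of_nat u ^ k')
       + of_nat M ^ 2 * (\<chi> (int u) * of_int (wf u))" if u: "u < M" for u
  proof (cases "\<chi> (int u) = 0")
    case True thus ?thesis by simp
  next
    case False
    hence "\<not> int p dvd int u" using chi_dvd by blast
    hence "u \<noteq> 0" by (intro notI) simp
    hence "(- int u) mod int M = - int u + int M" using u by (simp add: zmod_zminus1_eq_if)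
    hence "((- int u) mod int M) ^ k = (- int u) ^ Suc k' + int (Suc k') * int M * (- int u) ^ k' + (int M) ^ 2 * wf u"
      using wf[of u] Suc by (simp only:)
    hence hX: "((- int u) mod int M) ^ k = (- int u) ^ Suc k' + int (Suc k') * int M * (- int u) ^ k' + (int M) ^ 2 * wf u" .
    have "(of_int ((- int u) mod int M) :: complex) ^ k = of_int (((- int u) mod int M) ^ k)"
      by (simp only: of_int_power)
    also have "\<dots> = of_int ((- int u) ^ Suc k' + int (Suc k') * int M * (- int u) ^ k' + (int M) ^ 2 * wf u)"
      by (simp only: hX)
    also have "\<dots> = of_int (- int u) ^ Suc k' + of_nat (Suc k') * of_nat M * of_int (- int u) ^ k' + of_nat M ^ 2 * of_int (wf u)"
      by (simp only: of_int_add of_int_mult of_int_power of_int_of_nat_eq)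
    also have "\<dots> = (-1) ^ k * of_nat u ^ k + of_nat k * of_nat M * ((-1) ^ k' * of_nat u ^ k') + of_nat M ^ 2 * of_int (wf u)"
      unfolding neg_pow_c Suc ..
    finally show ?thesis by (simp add: algebra_simps)
  qed
  have A1: "Ssum R k = \<chi> (-1) * (\<Sum>u<M. \<chi> (int u) * of_int ((- int u) mod int M) ^ k)"
    unfolding M_def by (rule Ssum_sym[OF R(1)])
  have A2: "(\<Sum>u<M. \<chi> (int u) * of_int ((- int u) mod int M) ^ k)
    = (\<Sum>u<M. (-1) ^ k * (\<chi> (int u) * of_nat u ^ k) + of_nat k * of_nat M * (-1) ^ k' * (\<chi> (int u) * of_nat u ^ k')
       + of_nat M ^ 2 * (\<chi> (int u) * of_int (wf u)))"
    by (rule sum.cong) (simp_all only: termeq lessThan_iff)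
  have A3: "(\<Sum>u<M. (-1) ^ k * (\<chi> (int u) * of_nat u ^ k) + of_nat k * of_nat M * (-1) ^ k' * (\<chi> (int u) * of_nat u ^ k')
       + of_nat M ^ 2 * (\<chi> (int u) * of_int (wf u))) = (-1) ^ k * Ssum R k + of_nat k * of_nat M * (-1) ^ k' * Ssum R k' + of_nat M ^ 2 * W"
    unfolding Ssum_def M_def[symmetric] W_def by (simp only: sum.distrib sum_distrib_left)
  have "Ssum R k = \<chi> (-1) * ((-1) ^ k * Ssum R k + of_nat k * of_nat M * (-1) ^ k' * Ssum R k' + of_nat M ^ 2 * W)"
    using A1 unfolding A2 A3 .
  hence "Ssum R k = (\<chi> (-1) * (-1) ^ k) * Ssum R k + \<chi> (-1) * (of_nat k * of_nat M * (-1) ^ k' * Ssum R k' + of_nat M ^ 2 * W)"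
    by (simp only: distrib_left mult.assoc add.assoc)
  hence "2 * Ssum R k = \<chi> (-1) * (of_nat k * of_nat M * (-1) ^ k' * Ssum R k' + of_nat M ^ 2 * W)"
    using eps[OF par] by simp
  hence eqS: "Ssum R k / of_nat M = \<chi> (-1) * ((-1) ^ k' * (of_nat k * Ssum R k' / 2) + of_nat M / 2 * W)"
    using M0 by (simp add: field_simps power2_eq_square)
  have kS: "of_nat k * Ssum R k' / 2 \<in> PP"
  proof (cases "even k")
    case True
    then obtain k2 where k2: "k = 2 * k2" by blast
    have e: "of_nat k * Ssum R k' / 2 = of_nat k2 * Ssum R k'" unfolding k2 by simp
    have SP: "Ssum R k' \<in> PP" unfolding Ssum_def by (intro PP_sum PP_mult chi_PP PP_pow PP_of_nat)
    have "of_nat k2 * Ssum R k' \<in> PP" by (rule PP_mult[OF PP_of_nat SP])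
    thus ?thesis unfolding e .
  next
    case False
    have "of_nat k * Ssum R k' / 2 = of_nat k * (Ssum R k' / 2)" by simp
    thus ?thesis using PP_mult[OF PP_of_nat Ssum_half[OF R p2, of k']] by simp
  qed
  have MM: "M = 2 * 2 ^ (R - 1)" unfolding M_def p2 by (subst power_Suc[symmetric]) (use R(2) in simp)
  have M2: "of_nat M / 2 = (of_nat (2 ^ (R - 1)) :: complex)" unfolding MM by simp
  have WP: "W \<in> PP" unfolding W_def by (intro PP_sum PP_mult chi_PP PP_of_int)
  have "Ssum R k / of_nat M \<in> PP"
    unfolding eqS M2 by (intro PP_mult PP_add chi_PP PP_pow PP_uminus PP_1 kS PP_of_nat WP)
  thus ?thesis unfolding cg_def M_def by simp
qed


lemma Ssum_zero: assumes R: "R \<ge> m" and hyp: "p \<noteq> 2 \<or> R \<ge> 2" and par: "\<chi> (-1) \<noteq> (-1) ^ k"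
  shows "cg R (Ssum R k) 0"
proof (cases "p = 2")
  case True thus ?thesis using Ssum_zero_two[OF R _ True par] hyp by simp
next
  case False thus ?thesis using Ssum_zero_odd[OF R False par] by simp
qed

lemma T_step:
  assumes R: "R \<ge> m" and hyp: "p \<noteq> 2 \<or> R \<ge> 2" and par: "\<chi> (-1) \<noteq> (-1) ^ k" and a: "\<not> int p dvd a"
  shows "cg R (Tsum (Suc R) a k) (Tsum R a k)"
proof -
  define M where "M = p ^ R"
  have M0: "M > 0" unfolding M_def using p_pos by simp
  have pS: "p ^ Suc R = M * p" unfolding M_def by (simp add: mult.commute)
  define d where "d u v = ((int u + int M * int v) * a) div (int p * int M)" for u v :: nat
  define Cc where "Cc = (\<Sum>v<p. (int v * a) div int p)"
  define h where "h j = \<chi> (int j) * of_nat j ^ k * of_int ((int j * a) div int (p ^ Suc R))" for j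
  have "Tsum (Suc R) a k = (\<Sum>j<M * p. h j)" unfolding Tsum_def h_def pS ..
  also have "\<dots> = (\<Sum>v<p. \<Sum>u<M. h (u + M * v))" by (rule block_sum)
  finally have T1: "Tsum (Suc R) a k = (\<Sum>v<p. \<Sum>u<M. h (u + M * v))" .
  have cgterm: "cg R (h (u + M * v)) (\<chi> (int u) * of_nat u ^ k * of_int (d u v))" for u v
  proof -
    have c1: "\<chi> (int (u + M * v)) = \<chi> (int u)"
    proof -
      have "\<chi> (int (u + M * v)) = \<chi> (int u + int v * int p ^ R)"
        by (rule arg_cong[where f = \<chi>]) (simp add: M_def)
      also have "\<dots> = \<chi> (int u)" by (rule chi_per[OF R])
      finally show ?thesis .
    qed
    have c2: "(int (u + M * v) * a) div int (p ^ Suc R) = d u v"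
      unfolding d_def pS by (simp add: mult.commute)
    have "int M dvd int (u + M * v) - int u" by simp
    hence "int M dvd int (u + M * v) ^ k - int u ^ k" using pow_diff_dvd dvd_trans by blast
    then obtain t where t: "int (u + M * v) ^ k - int u ^ k = int M * t" by blast
    have t': "(of_nat (u + M * v) :: complex) ^ k = of_nat u ^ k + of_nat M * of_int t"
    proof -
      have "(of_int (int (u + M * v) ^ k) :: complex) = of_int (int u ^ k + int M * t)"
        using t by (metis add.commute diff_eq_eq)
      thus ?thesis by simp
    qed
    have "h (u + M * v) - \<chi> (int u) * of_nat u ^ k * of_int (d u v)
        = of_nat p ^ R * (\<chi> (int u) * of_int (d u v) * of_int t)"
      unfolding h_def c1 c2 t' by (simp add: algebra_simps M_def)
    thus ?thesis by (intro cg_intro[where w = "\<chi> (int u) * of_int (d u v) * of_int t"] PP_mult chi_PP PP_of_int)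
  qed
  have T2: "cg R (Tsum (Suc R) a k) (\<Sum>v<p. \<Sum>u<M. \<chi> (int u) * of_nat u ^ k * of_int (d u v))"
    unfolding T1 by (rule cg_sum, rule cg_sum, rule cgterm)
  have T3: "(\<Sum>v<p. \<Sum>u<M. \<chi> (int u) * of_nat u ^ k * of_int (d u v))
      = (\<Sum>u<M. \<Sum>v<p. \<chi> (int u) * of_nat u ^ k * of_int (d u v))"
    by (rule sum.swap)
  have T4: "(\<Sum>v<p. d u v) = int u * a div int M + Cc" for u
    unfolding d_def Cc_def by (rule v_sum[OF M0 prime a])
  have T5: "(\<Sum>u<M. \<Sum>v<p. \<chi> (int u) * of_nat u ^ k * of_int (d u v)) = Tsum R a k + of_int Cc * Ssum R k"
  proof -
    have "(\<Sum>u<M. \<Sum>v<p. \<chi> (int u) * of_nat u ^ k * of_int (d u v))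
        = (\<Sum>u<M. \<chi> (int u) * of_nat u ^ k * of_int (int u * a div int M) + of_int Cc * (\<chi> (int u) * of_nat u ^ k))"
    proof (rule sum.cong)
      fix u
      have "(\<Sum>v<p. \<chi> (int u) * of_nat u ^ k * of_int (d u v)) = \<chi> (int u) * of_nat u ^ k * of_int (\<Sum>v<p. d u v)"
        by (simp only: sum_distrib_left of_int_sum)
      also have "\<dots> = \<chi> (int u) * of_nat u ^ k * of_int (int u * a div int M) + of_int Cc * (\<chi> (int u) * of_nat u ^ k)"
        unfolding T4 by (simp add: algebra_simps)
      finally show "(\<Sum>v<p. \<chi> (int u) * of_nat u ^ k * of_int (d u v)) = \<chi> (int u) * of_nat u ^ k * of_int (int u * a div int M) + of_int Cc * (\<chi> (int u) * of_nat u ^ k)" .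
    qed simp
    also have "\<dots> = Tsum R a k + of_int Cc * Ssum R k"
      unfolding Tsum_def Ssum_def M_def by (simp only: sum.distrib sum_distrib_left)
    finally show ?thesis .
  qed
  have T6: "cg R (of_int Cc * Ssum R k) 0"
    using cg_mult[OF PP_of_int Ssum_zero[OF R hyp par], of Cc] by simp
  have "cg R (Tsum (Suc R) a k) (Tsum R a k + of_int Cc * Ssum R k)"
    using T2 unfolding T3 T5 .
  moreover have "cg R (Tsum R a k + of_int Cc * Ssum R k) (Tsum R a k + 0)"
    by (rule cg_add[OF cg_refl T6])
  ultimately show ?thesis using cg_trans by simp
qed

lemma T_level:
  assumes nm: "n \<ge> m" and hyp: "p \<noteq> 2 \<or> n \<ge> 2" and par: "\<chi> (-1) \<noteq> (-1) ^ k" and a: "\<not> int p dvd a"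
  shows "R \<ge> n \<Longrightarrow> cg n (Tsum R a k) (Tsum n a k)"
proof (induction R rule: dec_induct)
  case base thus ?case by (rule cg_refl)
next
  case (step R)
  have "cg R (Tsum (Suc R) a k) (Tsum R a k)"
    using T_step[where R=R and a=a] step.hyps nm hyp par a by auto
  hence "cg n (Tsum (Suc R) a k) (Tsum R a k)" using cg_mono step.hyps by blast
  thus ?case using cg_trans step.IH by blast
qed

end

context mctx begin

lemma sum_1F_Ssum: assumes R: "R \<ge> m"
  shows "(\<Sum>a=1..p ^ R. \<chi> (int a) * of_nat a ^ K) = Ssum R K"
proof -
  define F where "F = p ^ R"
  define f where "f a = \<chi> (int a) * of_nat a ^ K" for a
  have R1: "R \<ge> 1" using R m1 by simp
  have fF: "f F = 0"
  proof -
    have "int p dvd int F" unfolding F_def using R1 by (simp add: dvd_power)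
    thus ?thesis unfolding f_def using chi_dvd by simp
  qed
  have f0: "f 0 = 0" unfolding f_def using chi_0 by simp
  have s1: "{..<Suc F} = insert 0 {1..F}" by auto
  have "(\<Sum>a<Suc F. f a) = f 0 + (\<Sum>a=1..F. f a)" unfolding s1 by (subst sum.insert) auto
  moreover have "(\<Sum>a<Suc F. f a) = (\<Sum>a<F. f a) + f F" by simp
  ultimately have "(\<Sum>a=1..F. f a) = (\<Sum>a<F. f a)" using f0 fF by simp
  thus ?thesis unfolding f_def F_def Ssum_def .
qed

lemma Ssum_decomp: assumes R: "R \<ge> m"
  shows "Ssum R (Suc k) = of_nat (p ^ R) * (Eb (Suc k) + (\<Sum>i<Suc k. (fact (Suc k) * Eb i / fact i / fact (Suc (Suc k) - i)) * of_nat (p ^ R) ^ (Suc k - i)))"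
proof -
  define K where "K = Suc k"
  define F where "F = p ^ R"
  have Fm: "p ^ m * p ^ (R - m) = F" unfolding F_def using R by (metis le_add_diff_inverse power_add)
  have "Ssum R K / fact K = (\<Sum>i=0..K. Eb i / fact i * of_nat F ^ (Suc K - i) / fact (Suc K - i))"
    using power_sum_formula[where r = "p ^ (R - m)" and K = K] sum_1F_Ssum[OF R, of K] unfolding Fm F_def by simp
  also have "\<dots> = (\<Sum>i<K. Eb i / fact i * of_nat F ^ (Suc K - i) / fact (Suc K - i)) + Eb K / fact K * of_nat F"
    by (simp add: atLeast0AtMost lessThan_Suc_atMost[symmetric])
  finally have "Ssum R K = fact K * ((\<Sum>i<K. Eb i / fact i * of_nat F ^ (Suc K - i) / fact (Suc K - i)) + Eb K / fact K * of_nat F)"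
    by (simp add: field_simps)
  also have "\<dots> = of_nat F * (Eb K + (\<Sum>i<K. (fact K * Eb i / fact i / fact (Suc K - i)) * of_nat F ^ (K - i)))"
  proof -
    have "fact K * (\<Sum>i<K. Eb i / fact i * of_nat F ^ (Suc K - i) / fact (Suc K - i))
        = of_nat F * (\<Sum>i<K. (fact K * Eb i / fact i / fact (Suc K - i)) * of_nat F ^ (K - i))"
      unfolding sum_distrib_left
    proof (rule sum.cong)
      fix i assume "i \<in> {..<K}"
      hence "Suc K - i = Suc (K - i)" by simp
      thus "fact K * (Eb i / fact i * of_nat F ^ (Suc K - i) / fact (Suc K - i)) =
            of_nat F * (fact K * Eb i / fact i / fact (Suc K - i) * of_nat F ^ (K - i))"
        by (simp add: field_simps)
    qed simp
    thus ?thesis by (simp add: algebra_simps)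
  qed
  finally show ?thesis unfolding K_def F_def .
qed

lemma neg_aux: "(1 - x) * (- y / w) = (x - 1) * y / (w::complex)"
  by (metis minus_diff_eq minus_divide_left mult_minus_left mult_minus_right times_divide_eq_right)

lemma main_mctx:
  assumes nm: "n \<ge> m" and hyp: "p \<noteq> 2 \<or> n \<ge> 2" and par: "\<chi> (-1) \<noteq> (-1) ^ k" and a: "\<not> int p dvd a"
  shows "cg n ((1 - \<chi> a * of_int a ^ (k + 1)) * L_neg \<chi> (p ^ m) k) (\<chi> a * of_int a ^ k * Tsum n a k)"
proof -
  define K where "K = Suc k"
  define ci where "ci i = fact K * Eb i / fact i / fact (Suc K - i)" for i
  have ciQ: "ci i \<in> QQ" for i
    unfolding ci_def by (intro QQ_div_fact) (use QQ_mult[OF QQ_of_nat[of "fact K"] Eb_QQ[of i]] in simp)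
  obtain e where e: "\<forall>i<K. of_nat p ^ e * ci i \<in> PP" using QQ_common[of K ci] ciQ by blast
  define R where "R = m + n + K + e"
  define F where "F = p ^ R"
  have Rm: "R \<ge> m" and Rn: "R \<ge> n" unfolding R_def by simp_all
  have F0: "F > 0" unfolding F_def using p_pos by simp
  define Y where "Y = (\<Sum>i<K. ci i * of_nat F ^ (K - i))"
  have SD: "Ssum R K = of_nat F * (Eb K + Y)"
    using Ssum_decomp[OF Rm, of k] unfolding ci_def Y_def F_def K_def by simp
  obtain U W where W: "W \<in> ZZ" and eq: "(\<chi> a * of_int a ^ K - 1) * Ssum R K = of_nat K * of_nat F * U + of_nat F ^ 2 * W"
      and cgU: "cg R U (\<chi> a * of_int a ^ k * Tsum R a k)"
    using partIII[OF Rm a, of k] unfolding K_def[symmetric] F_def[symmetric] by blast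
  define X0 where "X0 = (1 - \<chi> a * of_int a ^ (k + 1)) * L_neg \<chi> (p ^ m) k"
  define c where "c = \<chi> a * of_int a ^ K - 1"
  have X0': "X0 = (\<chi> a * of_int a ^ (k + 1) - 1) * gen_bernoulli \<chi> (p ^ m) (k + 1) / of_nat (k + 1)"
    unfolding X0_def L_neg_def by (rule neg_aux)
  have X0: "X0 = c * Eb K / of_nat K"
    unfolding X0' c_def Eb_def K_def by simp
  have "K \<noteq> 0" unfolding K_def by simp
  hence Kpos: "(of_nat K :: complex) \<noteq> 0" by (simp only: of_nat_eq_0_iff not_False_eq_True)
  have eq2: "c * (Eb K + Y) = of_nat K * U + of_nat F * W"
  proof -
    have "of_nat F * (c * (Eb K + Y)) = of_nat F * (of_nat K * U + of_nat F * W)"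
      using eq unfolding SD c_def by (simp add: algebra_simps power2_eq_square)
    thus ?thesis using F0 by simp
  qed
  have diff: "(X0 - U) / of_nat p ^ n = of_nat p ^ (R - n) / of_nat K * W - c * (Y / (of_nat K * of_nat p ^ n))"
  proof -
    have h1: "X0 - U = (of_nat F * W - c * Y) / of_nat K"
      using eq2 Kpos unfolding X0 by (simp add: field_simps)
    have h2: "(of_nat F :: complex) = of_nat p ^ (R - n) * of_nat p ^ n"
    proof -
      have "p ^ R = p ^ (R - n) * p ^ n" using Rn by (metis le_add_diff_inverse2 power_add)
      thus ?thesis unfolding F_def by (simp only: of_nat_mult of_nat_power)
    qed
    have pn: "(of_nat p ^ n :: complex) \<noteq> 0" using p_pos by simp
    show ?thesis unfolding h1 h2 using pn Kpos by (simp add: field_simps)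
  qed
  have P1: "of_nat p ^ (R - n) / of_nat K \<in> PP"
    by (rule pow_div_PP) (auto simp: K_def R_def)
  have P2: "Y / (of_nat K * of_nat p ^ n) \<in> PP"
  proof -
    have "Y / (of_nat K * of_nat p ^ n) = (\<Sum>i<K. (of_nat p ^ e * ci i) * (of_nat p ^ (R * (K - i) - e - n) / of_nat K))"
      unfolding Y_def sum_divide_distrib
    proof (rule sum.cong)
      fix i assume i: "i \<in> {..<K}"
      have "1 \<le> K - i" using i by simp
      hence "R * 1 \<le> R * (K - i)" by (rule mult_le_mono2)
      hence "R \<le> R * (K - i)" by simp
      hence ge: "R * (K - i) \<ge> e + n" unfolding R_def by linarith
      define t where "t = R * (K - i) - e - n"
      have Rt: "R * (K - i) = e + t + n" unfolding t_def using ge by simp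
      have "(of_nat F :: complex) ^ (K - i) = of_nat p ^ (R * (K - i))" unfolding F_def by (simp add: power_mult)
      also have "\<dots> = of_nat p ^ e * of_nat p ^ t * of_nat p ^ n"
        unfolding Rt by (simp only: power_add)
      finally have h: "(of_nat F :: complex) ^ (K - i) = of_nat p ^ e * of_nat p ^ (R * (K - i) - e - n) * of_nat p ^ n"
        unfolding t_def .
      show "ci i * of_nat F ^ (K - i) / (of_nat K * of_nat p ^ n) = of_nat p ^ e * ci i * (of_nat p ^ (R * (K - i) - e - n) / of_nat K)"
        unfolding h using p_pos Kpos by (simp add: field_simps)
    qed simp
    also have "\<dots> \<in> PP"
    proof (rule PP_sum)
      fix i assume i: "i \<in> {..<K}"
      have "R * (K - i) - e - n \<ge> K"
      proof -
        have "1 \<le> K - i" using i by simp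
        hence "R * 1 \<le> R * (K - i)" by (rule mult_le_mono2)
        hence "R * (K - i) \<ge> R" by simp
        moreover have "R = m + n + K + e" by (simp add: R_def)
        ultimately show ?thesis by linarith
      qed
      hence "of_nat p ^ (R * (K - i) - e - n) / of_nat K \<in> PP" by (intro pow_div_PP) (auto simp: K_def)
      moreover have "of_nat p ^ e * ci i \<in> PP" using e i by simp
      ultimately show "of_nat p ^ e * ci i * (of_nat p ^ (R * (K - i) - e - n) / of_nat K) \<in> PP"
        using PP_mult by blast
    qed
    finally show ?thesis .
  qed
  have cP: "c \<in> PP" unfolding c_def by (intro PP_diff PP_mult chi_PP PP_pow PP_of_int PP_1)
  have "(X0 - U) / of_nat p ^ n \<in> PP" unfolding diff
    by (rule PP_diff[OF PP_mult[OF P1 PP_ZZ[OF W]] PP_mult[OF cP P2]])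
  hence c1: "cg n X0 U" unfolding cg_def .
  have c2: "cg n U (\<chi> a * of_int a ^ k * Tsum R a k)" by (rule cg_mono[OF cgU Rn])
  have c3: "cg n (\<chi> a * of_int a ^ k * Tsum R a k) (\<chi> a * of_int a ^ k * Tsum n a k)"
    by (rule cg_mult[OF _ T_level[OF nm hyp par a Rn]]) (intro PP_mult chi_PP PP_pow PP_of_int)
  show ?thesis using cg_trans[OF cg_trans[OF c1 c2] c3] unfolding X0_def .
qed

end

lemma floor_div_eq: "\<lfloor>real_of_int (int j * a) / real (N :: nat)\<rfloor> = (int j * a) div int N"
proof -
  have "real N = real_of_int (int N)" by simp
  thus ?thesis using floor_divide_of_int_eq[of "int j * a" "int N"] by (simp only:)
qed

theorem theorem3p1:
  fixes p m n k :: nat and a :: int and \<chi> :: "int \<Rightarrow> complex"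
  assumes "prime p" and "\<not> int p dvd a" and "m \<ge> 1"
    and "dirichlet_char (int p ^ m) \<chi>"
    and "n \<ge> m" and "\<chi> (-1) \<noteq> (-1) ^ k"
    and "p \<ge> 5 \<or> (p \<in> {2, 3} \<and> n \<ge> 2)"
  shows "cong_ppow p n
    ((1 - \<chi> a * of_int a ^ (k + 1)) * L_neg \<chi> (p ^ m) k)
    (\<chi> a * of_int a ^ k *
      (\<Sum>j=1..p ^ n - 1. \<chi> (int j) * of_nat j ^ k *
          of_int \<lfloor>real_of_int (int j * a) / real (p ^ n)\<rfloor>))"
proof -
  obtain z Mz where ps: "pset p z Mz" and chiZ: "\<forall>x. \<chi> x \<in> pset.ZZ z Mz"
    using exists_root_ring[OF assms(1) assms(3) assms(4)] by blast
  interpret mctx p z Mz m \<chi>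
    using ps chiZ assms(3) assms(4) by (intro mctx.intro mctx_axioms.intro) auto
  have hyp: "p \<noteq> 2 \<or> n \<ge> 2" using assms(7) by auto
  have main: "cg n ((1 - \<chi> a * of_int a ^ (k + 1)) * L_neg \<chi> (p ^ m) k) (\<chi> a * of_int a ^ k * Tsum n a k)"
    by (rule main_mctx[OF assms(5) hyp assms(6) assms(2)])
  have Teq: "Tsum n a k = (\<Sum>j=1..p ^ n - 1. \<chi> (int j) * of_nat j ^ k *
          of_int \<lfloor>real_of_int (int j * a) / real (p ^ n)\<rfloor>)"
  proof -
    define f where "f j = \<chi> (int j) * of_nat j ^ k * of_int ((int j * a) div int (p ^ n))" for j
    have pn: "p ^ n > 0" using p_pos by simp
    have s1: "{..<p ^ n} = insert 0 {1..p ^ n - 1}" using pn by auto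
    have "Tsum n a k = (\<Sum>j<p ^ n. f j)" unfolding Tsum_def f_def ..
    also have "\<dots> = f 0 + (\<Sum>j=1..p ^ n - 1. f j)" unfolding s1 by (subst sum.insert) auto
    also have "f 0 = 0" unfolding f_def using chi_0 by simp
    finally show ?thesis unfolding f_def floor_div_eq by simp
  qed
  show ?thesis using cg_cong_ppow[OF main] unfolding Teq .
qed

end
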